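(* Let $I\subset[n]$ and $m=\#I$. Then the map $$\mathbb Z_2^m\backslash\mathrm{SPI}_m\to\mathbb Z_2^n\backslash\Omega^I_n/(\mathbb Z_2^n\rtimes\mathfrak S_n),\qquad \tau\mapsto \mathbb Z_2^n\,h(\sigma_I)\begin{pmatrix}\tau&0\\0&\mathbf 1_{n-m}\\\mathbf 1_m&0\\0&0\end{pmatrix}(\mathbb Z_2^n\rtimes\mathfrak S_n)$$ is a well-defined bijection.
   Context: $\mathrm{SPP}_k$: $k\times k$ integer matrices with entries in $\{-1,0,1\}$ and at most one nonzero entry per row and column. $\mathrm{SPI}_m=\mathrm{SPP}_m\cap\mathrm{Sym}_m(\mathbb Z)$; $\varepsilon=\mathrm{diag}(\varepsilon_1,\dots,\varepsilon_m)\in\mathbb Z_2^m=\{\pm1\}^m$ acts on $\mathrm{SPI}_m$ by $\tau\mapsto\varepsilon\tau\varepsilon$. $\Omega^\circ_n$ is the set of $\begin{pmatrix}\tau_1\\\tau_2\end{pmatrix}\in\mathrm M_{2n,n}(\mathbb Z)$ with $\tau_1,\tau_2\in\mathrm{SPP}_n$, $\tau_1^t\tau_2$ symmetric, of rank $n$. For $D\in\mathrm M_n$, $\mathrm{\acute{e}ch}\,D$ is the set of $i\in[n]$ such that the rows $i,\dots,n$ of $D$ have larger rank than rows $i+1,\dots,n$ (the pivot rows of a column echelon form of $D$). $\Omega^I_n=\{\begin{pmatrix}\tau_1\\\tau_2\end{pmatrix}\in\Omega^\circ_n:\mathrm{\acute{e}ch}\,\tau_2=I\}$. $\mathbb Z_2^n$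 acts on the left by $\mathrm{diag}(\varepsilon,\varepsilon)$ and $\mathbb Z_2^n\rtimes\mathfrak S_n$ (signed permutation matrices) by right multiplication; $\Omega^I_n$ is stable. For $I=\{i_1<\dots<i_m\}$, $[n]\setminus I=\{i'_1<\dots<i'_{n-m}\}$, $\sigma_I\in\mathfrak S_n$ sends $k\mapsto i_k$ ($k\le m$), $m+k\mapsto i'_k$, viewed as the permutation matrix with $\sigma e_i=e_{\sigma(i)}$, and $h(\sigma_I)=\mathrm{diag}(\sigma_I,\sigma_I)$. *)

theory Defs
  imports "Jordan_Normal_Form.DL_Rank" "HOL-Combinatorics.Permutations"
begin

text \<open>Integer matrices are Jordan_Normal_Form matrices of type int mat.
  Indices are 0-based: [n] is rendered as {..<n}.\<close>

definition int_rank :: "int mat \<Rightarrow> nat" where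
  "int_rank A = vec_space.rank (dim_row A) (map_mat rat_of_int A :: rat mat)"

definition SPP :: "nat \<Rightarrow> int mat set" where
  "SPP k = {A \<in> carrier_mat k k.
     (\<forall>i<k. \<forall>j<k. A $$ (i,j) \<in> {-1,0,1}) \<and>
     (\<forall>i<k. \<forall>j<k. \<forall>j'<k. A $$ (i,j) \<noteq> 0 \<longrightarrow> A $$ (i,j') \<noteq> 0 \<longrightarrow> j = j') \<and>
     (\<forall>j<k. \<forall>i<k. \<forall>i'<k. A $$ (i,j) \<noteq> 0 \<longrightarrow> A $$ (i',j) \<noteq> 0 \<longrightarrow> i = i')}"

definition SPI :: "nat \<Rightarrow> int mat set" where
  "SPI m = {A \<in> SPP m. transpose_mat A = A}"

text \<open>Z_2^m realised as diagonal sign matrices diag(eps_1,...,eps_m).\<close>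
definition sign_diags :: "nat \<Rightarrow> int mat set" where
  "sign_diags m = {E \<in> carrier_mat m m.
     (\<forall>i<m. \<forall>j<m. i \<noteq> j \<longrightarrow> E $$ (i,j) = 0) \<and> (\<forall>i<m. E $$ (i,i) \<in> {1,-1})}"

definition perm_mat :: "nat \<Rightarrow> (nat \<Rightarrow> nat) \<Rightarrow> int mat" where
  "perm_mat n \<sigma> = mat n n (\<lambda>(i,j). if i = \<sigma> j then 1 else 0)"

text \<open>Z_2^n semidirect S_n as signed permutation matrices.\<close>
definition signed_perms :: "nat \<Rightarrow> int mat set" where
  "signed_perms n = {E * perm_mat n \<sigma> | E \<sigma>. E \<in> sign_diags n \<and> \<sigma> permutes {..<n}}"

definition rows_from :: "nat \<Rightarrow> int mat \<Rightarrow> int mat" where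
  "rows_from i D = mat_of_rows (dim_col D) (drop i (rows D))"

definition ech :: "int mat \<Rightarrow> nat set" where
  "ech D = {i. i < dim_row D \<and> int_rank (rows_from (Suc i) D) < int_rank (rows_from i D)}"

definition Omega0 :: "nat \<Rightarrow> int mat set" where
  "Omega0 n = {\<tau>1 @\<^sub>r \<tau>2 | \<tau>1 \<tau>2. \<tau>1 \<in> SPP n \<and> \<tau>2 \<in> SPP n \<and>
     transpose_mat (transpose_mat \<tau>1 * \<tau>2) = transpose_mat \<tau>1 * \<tau>2 \<and>
     int_rank (\<tau>1 @\<^sub>r \<tau>2) = n}"

definition OmegaI :: "nat \<Rightarrow> nat set \<Rightarrow> int mat set" where
  "OmegaI n I = {\<tau>1 @\<^sub>r \<tau>2 | \<tau>1 \<tau>2. \<tau>1 @\<^sub>r \<tau>2 \<in> Omega0 n \<and>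
     \<tau>1 \<in> carrier_mat n n \<and> \<tau>2 \<in> carrier_mat n n \<and> ech \<tau>2 = I}"

definition dblock :: "nat \<Rightarrow> int mat \<Rightarrow> int mat" where
  "dblock n X = four_block_mat X (0\<^sub>m n n) (0\<^sub>m n n) X"

definition SPI_rel :: "nat \<Rightarrow> (int mat \<times> int mat) set" where
  "SPI_rel m = {(\<tau>, \<tau>'). \<tau> \<in> SPI m \<and> \<tau>' \<in> SPI m \<and>
     (\<exists>E \<in> sign_diags m. \<tau>' = E * \<tau> * E)}"

definition Omega_rel :: "nat \<Rightarrow> nat set \<Rightarrow> (int mat \<times> int mat) set" where
  "Omega_rel n I = {(\<omega>, \<omega>'). \<omega> \<in> OmegaI n I \<and> \<omega>' \<in> OmegaI n I \<and>
     (\<exists>E \<in> sign_diags n. \<exists>G \<in> signed_perms n. \<omega>' = dblock n E * \<omega> * G)}"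

definition sigmaI :: "nat \<Rightarrow> nat set \<Rightarrow> nat \<Rightarrow> nat" where
  "sigmaI n I = (\<lambda>k. if k < n
      then (sorted_list_of_set I @ sorted_list_of_set ({..<n} - I)) ! k else k)"

definition PhiI :: "nat \<Rightarrow> nat set \<Rightarrow> int mat \<Rightarrow> int mat" where
  "PhiI n I \<tau> = (let m = card I in
     dblock n (perm_mat n (sigmaI n I)) *
     (four_block_mat \<tau> (0\<^sub>m m (n-m)) (0\<^sub>m (n-m) m) (1\<^sub>m (n-m)) @\<^sub>r
      four_block_mat (1\<^sub>m m) (0\<^sub>m m (n-m)) (0\<^sub>m (n-m) m) (0\<^sub>m (n-m) (n-m))))"

end

theory Submission
  imports Defs
begin

lemma sum_single:
  assumes "finite A" "v \<in> A" "\<And>x. x \<in> A \<Longrightarrow> x \<noteq> v \<Longrightarrow> g x = 0"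
  shows "sum g A = (g v :: 'a :: comm_monoid_add)"
proof -
  have "sum g A = g v + sum g (A - {v})" using sum.remove[OF assms(1,2)] .
  moreover have "sum g (A - {v}) = 0" using assms(3) by (intro sum.neutral) auto
  ultimately show ?thesis by simp
qed

lemma (in vec_space) rank_upper:
  assumes "A \<in> carrier_mat n nc"
  shows "rank A \<le> card (set (cols A) - {0\<^sub>v n})"
proof -
  obtain S where S: "maximal S (\<lambda>T. T \<subseteq> set (cols A) \<and> lin_indpt T)"
    using maximal_exists[of "(\<lambda>T. T \<subseteq> set (cols A) \<and> lin_indpt T)" "card (set (cols A))" "{}"]
    by (meson List.finite_set card_mono empty_iff empty_subsetI finite_lin_indpt2 rev_finite_subset)
  have sub: "S \<subseteq> set (cols A)" "lin_indpt S" using S unfolding maximal_def by auto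
  have "set (cols A) \<subseteq> carrier_vec n" using cols_dim assms by blast
  have nz: "(UNIV::'a set) \<noteq> {0}"
  proof
    assume "(UNIV::'a set) = {0}"
    then have "(1::'a) \<in> {0}" by (metis UNIV_I)
    then show False by simp
  qed
  have Sc: "S \<subseteq> carrier_vec n" using sub(1) \<open>set (cols A) \<subseteq> carrier_vec n\<close> by simp
  have "0\<^sub>v n \<notin> S" by (rule zero_nin_lin_indpt[OF Sc sub(2) nz])

  then have "S \<subseteq> set (cols A) - {0\<^sub>v n}" using sub by blast
  then have "card S \<le> card (set (cols A) - {0\<^sub>v n})" by (simp add: card_mono)
  then show ?thesis using rank_card_indpt[OF assms S] by simp
qed

lemma (in vec_space) rank_lower:
  assumes A: "A \<in> carrier_mat n nc"
    and S: "S \<subseteq> {..<nc}"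
    and r: "\<And>j. j \<in> S \<Longrightarrow> r j < n \<and> A $$ (r j, j) \<noteq> 0"
    and priv: "\<And>j j'. j \<in> S \<Longrightarrow> j' \<in> S \<Longrightarrow> j' \<noteq> j \<Longrightarrow> A $$ (r j, j') = 0"
  shows "card S \<le> rank A"
proof -
  let ?U = "col A ` S"
  have inj: "inj_on (col A) S"
  proof
    fix j j' assume jj: "j \<in> S" "j' \<in> S" "col A j = col A j'"
    show "j = j'"
    proof (rule ccontr)
      assume ne: "j \<noteq> j'"
      have d: "r j < dim_row A" "j < dim_col A" "j' < dim_col A" using r[OF jj(1)] S jj(1,2) A by auto
      have "A $$ (r j, j) = col A j $ r j" using d by simp
      also have "\<dots> = col A j' $ r j" using jj(3) by simp
      also have "\<dots> = A $$ (r j, j')" using d by simp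
      finally show False using r[OF jj(1)] priv[OF jj(1) jj(2)] ne by simp
    qed
  qed
  have U: "?U \<subseteq> set (cols A)" using S A by (auto simp: cols_def)
  have Uc: "?U \<subseteq> carrier_vec n" using S A by auto
  have li: "lin_indpt ?U"
  proof
    assume "lin_dep ?U"
    then obtain B a v where B: "finite B" "B \<subseteq> ?U" "lincomb a B = 0\<^sub>v n" "v \<in> B" "a v \<noteq> 0"
      unfolding lin_dep_def by auto
    obtain j where j: "j \<in> S" "v = col A j" using B by auto
    have "lincomb a B $ r j = sum (\<lambda>x. a x * x $ r j) B"
      using lincomb_index[of "r j" B a] r[OF j(1)] B Uc by auto
    also have "\<dots> = a v * v $ r j"
    proof (rule sum_single)
      show "v \<in> B" "finite B" by fact+
    next
      fix x assume x: "x \<in> B" "x \<noteq> v"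
      then obtain j' where j': "j' \<in> S" "x = col A j'" using B by auto
      then have "j' \<noteq> j" using x j by auto
      then show "a x * x $ r j = 0" using priv[OF j(1) j'(1)] j' r[OF j(1)] S A by auto
    qed
    finally have "a v * v $ r j = 0" using B r[OF j(1)] by simp
    moreover have "v $ r j \<noteq> 0" using j r[OF j(1)] S A by auto
    ultimately show False using B by simp
  qed
  have "card ?U \<le> rank A" using rank_ge_card_indpt[OF A U li] .
  then show ?thesis using card_image[OF inj] by simp
qed


lemma int_rank_lower:
  assumes A: "A \<in> carrier_mat nr nc"
    and S: "S \<subseteq> {..<nc}"
    and r: "\<And>j. j \<in> S \<Longrightarrow> r j < nr \<and> A $$ (r j, j) \<noteq> 0"
    and priv: "\<And>j j'. j \<in> S \<Longrightarrow> j' \<in> S \<Longrightarrow> j' \<noteq> j \<Longrightarrow> A $$ (r j, j') = 0"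
  shows "card S \<le> int_rank A"
proof -
  let ?B = "map_mat rat_of_int A"
  have B: "?B \<in> carrier_mat nr nc" using A by auto
  have "card S \<le> vec_space.rank nr ?B"
    by (rule vec_space.rank_lower[OF B S, of r]) (use r priv S A in auto)
  then show ?thesis unfolding int_rank_def using A by simp
qed

lemma int_rank_upper:
  assumes A: "A \<in> carrier_mat nr nc"
  shows "int_rank A \<le> card {j. j < nc \<and> (\<exists>i<nr. A $$ (i,j) \<noteq> 0)}"
proof -
  let ?B = "map_mat rat_of_int A"
  let ?J = "{j. j < nc \<and> (\<exists>i<nr. A $$ (i,j) \<noteq> 0)}"
  have B: "?B \<in> carrier_mat nr nc" using A by auto
  have "set (cols ?B) - {0\<^sub>v nr} \<subseteq> col ?B ` ?J"
  proof
    fix v assume v: "v \<in> set (cols ?B) - {0\<^sub>v nr}"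
    then obtain j where j: "j < nc" "v = col ?B j" using B by (auto simp: cols_def)
    have "\<exists>i<nr. A $$ (i,j) \<noteq> 0"
    proof (rule ccontr)
      assume "\<not> ?thesis"
      then have "v = 0\<^sub>v nr" using j A by (intro eq_vecI) auto
      then show False using v by simp
    qed
    then show "v \<in> col ?B ` ?J" using j by auto
  qed
  moreover have fin: "finite ?J" by (rule finite_subset[of _ "{..<nc}"]) auto
  ultimately have "card (set (cols ?B) - {0\<^sub>v nr}) \<le> card (col ?B ` ?J)"
    by (intro card_mono) auto
  also have "\<dots> \<le> card ?J" by (rule card_image_le[OF fin])
  finally have "card (set (cols ?B) - {0\<^sub>v nr}) \<le> card ?J" .
  then show ?thesis unfolding int_rank_def using vec_space.rank_upper[OF B] A by simp
qed

definition sdiag :: "nat \<Rightarrow> (nat \<Rightarrow> int) \<Rightarrow> int mat" where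
  "sdiag m e = mat m m (\<lambda>(i,j). if i = j then e i else 0)"
definition spm :: "nat \<Rightarrow> (nat \<Rightarrow> nat) \<Rightarrow> (nat \<Rightarrow> int) \<Rightarrow> int mat" where
  "spm n p s = mat n n (\<lambda>(i,j). if i = p j then s j else 0)"

lemma sdiag_carrier[simp]: "sdiag m e \<in> carrier_mat m m" by (simp add: sdiag_def)
lemma spm_carrier[simp]: "spm n p s \<in> carrier_mat n n" by (simp add: spm_def)

lemma sdiag_mult_left:
  assumes A: "A \<in> carrier_mat m k"
  shows "sdiag m e * A = mat m k (\<lambda>(i,j). e i * A $$ (i,j))"
proof (rule eq_matI)
  fix i j assume "i < dim_row (mat m k (\<lambda>(i,j). e i * A $$ (i,j)))" "j < dim_col (mat m k (\<lambda>(i,j). e i * A $$ (i,j)))"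
  then have ij: "i < m" "j < k" by auto
  have "(sdiag m e * A) $$ (i,j) = (\<Sum>l\<in>{0..<m}. (if i = l then e i else 0) * A $$ (l,j))"
    using ij A by (simp add: sdiag_def scalar_prod_def)
  also have "\<dots> = (if i = i then e i else 0) * A $$ (i,j)"
    by (rule sum_single) (use ij in auto)
  finally show "(sdiag m e * A) $$ (i,j) = mat m k (\<lambda>(i,j). e i * A $$ (i,j)) $$ (i,j)" using ij by simp
qed (use A in \<open>auto simp: sdiag_def\<close>)

lemma sdiag_mult_right:
  assumes A: "A \<in> carrier_mat k m"
  shows "A * sdiag m e = mat k m (\<lambda>(i,j). A $$ (i,j) * e j)"
proof (rule eq_matI)
  fix i j assume "i < dim_row (mat k m (\<lambda>(i,j). A $$ (i,j) * e j))" "j < dim_col (mat k m (\<lambda>(i,j). A $$ (i,j) * e j))"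
  then have ij: "i < k" "j < m" by auto
  have "(A * sdiag m e) $$ (i,j) = (\<Sum>l\<in>{0..<m}. A $$ (i,l) * (if l = j then e l else 0))"
    using ij A by (simp add: sdiag_def scalar_prod_def)
  also have "\<dots> = A $$ (i,j) * (if j = j then e j else 0)"
    by (rule sum_single) (use ij in auto)
  finally show "(A * sdiag m e) $$ (i,j) = mat k m (\<lambda>(i,j). A $$ (i,j) * e j) $$ (i,j)" using ij by simp
qed (use A in \<open>auto simp: sdiag_def\<close>)

lemma spm_mult_right:
  assumes A: "A \<in> carrier_mat k n" and p: "p permutes {..<n}"
  shows "A * spm n p s = mat k n (\<lambda>(i,j). A $$ (i, p j) * s j)"
proof (rule eq_matI)
  fix i j assume "i < dim_row (mat k n (\<lambda>(i,j). A $$ (i, p j) * s j))" "j < dim_col (mat k n (\<lambda>(i,j). A $$ (i, p j) * s j))"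
  then have ij: "i < k" "j < n" by auto
  have pj: "p j < n" using permutes_in_image[OF p, of j] ij by simp
  have "(A * spm n p s) $$ (i,j) = (\<Sum>l\<in>{0..<n}. A $$ (i,l) * (if l = p j then s j else 0))"
    using ij A by (simp add: spm_def scalar_prod_def)
  also have "\<dots> = A $$ (i,p j) * (if p j = p j then s j else 0)"
    by (rule sum_single) (use ij pj in auto)
  finally show "(A * spm n p s) $$ (i,j) = mat k n (\<lambda>(i,j). A $$ (i, p j) * s j) $$ (i,j)" using ij by simp
qed (use A in \<open>auto simp: spm_def\<close>)

lemma spm_mult_left:
  assumes A: "A \<in> carrier_mat n k" and p: "p permutes {..<n}"
  shows "spm n p s * A = mat n k (\<lambda>(i,j). s (inv_into UNIV p i) * A $$ (inv_into UNIV p i, j))"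
proof (rule eq_matI)
  fix i j assume "i < dim_row (mat n k (\<lambda>(i,j). s (inv_into UNIV p i) * A $$ (inv_into UNIV p i, j)))" "j < dim_col (mat n k (\<lambda>(i,j). s (inv_into UNIV p i) * A $$ (inv_into UNIV p i, j)))"
  then have ij: "i < n" "j < k" by auto
  have pi: "inv_into UNIV p i < n" using permutes_in_image[OF permutes_inv[OF p], of i] ij by simp
  have "(spm n p s * A) $$ (i,j) = (\<Sum>l\<in>{0..<n}. (if i = p l then s l else 0) * A $$ (l,j))"
    using ij A by (simp add: spm_def scalar_prod_def)
  also have "\<dots> = (if i = p (inv_into UNIV p i) then s (inv_into UNIV p i) else 0) * A $$ (inv_into UNIV p i,j)"
  proof (rule sum_single)
    fix l assume "l \<in> {0..<n}" "l \<noteq> inv_into UNIV p i"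
    then have "i \<noteq> p l" using permutes_inverses(2)[OF p] by metis
    then show "(if i = p l then s l else 0) * A $$ (l,j) = 0" by simp
  qed (use pi in auto)
  also have "\<dots> = s (inv_into UNIV p i) * A $$ (inv_into UNIV p i,j)" using permutes_inverses(1)[OF p] by simp
  finally show "(spm n p s * A) $$ (i,j) = mat n k (\<lambda>(i,j). s (inv_into UNIV p i) * A $$ (inv_into UNIV p i, j)) $$ (i,j)" using ij by simp
qed (use A in \<open>auto simp: spm_def\<close>)

lemma perm_mat_spm: "perm_mat n p = spm n p (\<lambda>_. 1)"
  unfolding perm_mat_def spm_def by (rule eq_matI) auto

lemma dblock_sdiag: "dblock n (sdiag n e) = sdiag (n + n) (\<lambda>i. if i < n then e i else e (i - n))"
  unfolding dblock_def sdiag_def by (rule eq_matI) auto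

lemma dblock_append:
  assumes P: "P \<in> carrier_mat n n" and X: "X \<in> carrier_mat n k" and Y: "Y \<in> carrier_mat n k"
  shows "dblock n P * (X @\<^sub>r Y) = (P * X) @\<^sub>r (P * Y)"
proof -
  have XY: "X @\<^sub>r Y = four_block_mat X (0\<^sub>m n 0) Y (0\<^sub>m n 0)" unfolding append_rows_def using X Y by simp
  have "dblock n P * (X @\<^sub>r Y) = four_block_mat (P * X + 0\<^sub>m n n * Y) (P * 0\<^sub>m n 0 + 0\<^sub>m n n * 0\<^sub>m n 0)
     (0\<^sub>m n n * X + P * Y) (0\<^sub>m n n * 0\<^sub>m n 0 + P * 0\<^sub>m n 0)"
    unfolding dblock_def XY
    by (rule mult_four_block_mat[OF P zero_carrier_mat zero_carrier_mat P X zero_carrier_mat Y zero_carrier_mat])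
  also have "\<dots> = four_block_mat (P * X) (0\<^sub>m n 0) (P * Y) (0\<^sub>m n 0)"
    using P X Y by simp
  also have "\<dots> = (P * X) @\<^sub>r (P * Y)" unfolding append_rows_def using P X Y by simp
  finally show ?thesis .
qed

lemma append_rows_mat:
  assumes X: "X \<in> carrier_mat n k" and Y: "Y \<in> carrier_mat n' k"
  shows "X @\<^sub>r Y = mat (n + n') k (\<lambda>(r,j). if r < n then X $$ (r,j) else Y $$ (r - n, j))"
  unfolding append_rows_def using X Y by (intro eq_matI) auto

lemma sign_diags_sdiag: "E \<in> sign_diags m \<Longrightarrow> E = sdiag m (\<lambda>i. E $$ (i,i))"
  unfolding sign_diags_def sdiag_def by (rule eq_matI) auto

lemma sign_diags_entry: "E \<in> sign_diags m \<Longrightarrow> i < m \<Longrightarrow> E $$ (i,i) \<in> {1,-1}"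
  unfolding sign_diags_def by auto

lemma sdiag_in_sign_diags: "(\<And>i. i < m \<Longrightarrow> e i \<in> {1,-1}) \<Longrightarrow> sdiag m e \<in> sign_diags m"
  unfolding sign_diags_def sdiag_def by auto

lemma signed_perms_spm:
  assumes "G \<in> signed_perms n"
  shows "\<exists>p s. p permutes {..<n} \<and> (\<forall>j<n. s j \<in> {1,-1}) \<and> G = spm n p s"
proof -
  obtain E p where G: "G = E * perm_mat n p" and E: "E \<in> sign_diags n" and p: "p permutes {..<n}"
    using assms unfolding signed_perms_def by blast
  have E': "E = sdiag n (\<lambda>i. E $$ (i,i))" by (rule sign_diags_sdiag[OF E])
  have "G = E * spm n p (\<lambda>_. 1)" unfolding G perm_mat_spm ..
  also have "\<dots> = sdiag n (\<lambda>i. E $$ (i,i)) * spm n p (\<lambda>_. 1)"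
    by (rule arg_cong[where f = "\<lambda>X. X * spm n p (\<lambda>_. 1)"]) (rule E')
  also have "\<dots> = mat n n (\<lambda>(i,j). E $$ (i,i) * spm n p (\<lambda>_. 1) $$ (i,j))"
    by (rule sdiag_mult_left) simp
  also have "\<dots> = spm n p (\<lambda>j. E $$ (p j, p j))"
    unfolding spm_def by (rule eq_matI) auto
  finally have G': "G = spm n p (\<lambda>j. E $$ (p j, p j))" .
  have S': "\<forall>j<n. E $$ (p j, p j) \<in> {1,-1}"
  proof (intro allI impI)
    fix j assume "j < n"
    then have "p j < n" using permutes_in_image[OF p, of j] by simp
    then show "E $$ (p j, p j) \<in> {1,-1}" using sign_diags_entry[OF E] by blast
  qed
  show ?thesis
    by (rule exI[of _ p], rule exI[of _ "\<lambda>j. E $$ (p j, p j)"]) (use p S' G' in simp)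
qed

lemma sigmaI_facts:
  assumes I: "I \<subseteq> {..<n}"
  shows "sigmaI n I permutes {..<n}" "\<And>k. k < n \<Longrightarrow> sigmaI n I k \<in> I \<longleftrightarrow> k < card I"
proof -
  let ?L1 = "sorted_list_of_set I" and ?L2 = "sorted_list_of_set ({..<n} - I)"
  let ?L = "?L1 @ ?L2"
  have fI: "finite I" using I finite_subset by blast
  have d: "distinct ?L" using fI by auto
  have sL: "set ?L = {..<n}" using fI I by auto
  have len1: "length ?L1 = card I" using fI by simp
  have lenL: "length ?L = n" using distinct_card[OF d] sL by simp
  have "bij_betw ((!) ?L) {..<n} {..<n}"
    by (rule bij_betw_nth[OF d]) (use lenL sL in auto)
  then have "bij_betw (sigmaI n I) {..<n} {..<n}"
    by (rule bij_betw_cong[THEN iffD1, rotated]) (auto simp: sigmaI_def)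
  then show "sigmaI n I permutes {..<n}"
    by (rule bij_imp_permutes) (auto simp: sigmaI_def)
  fix k assume k: "k < n"
  show "sigmaI n I k \<in> I \<longleftrightarrow> k < card I"
  proof (cases "k < card I")
    case True
    then have "sigmaI n I k = ?L1 ! k" using k len1 by (simp add: sigmaI_def nth_append)
    moreover have "?L1 ! k \<in> set ?L1" using True len1 by (metis nth_mem)
    then have "?L1 ! k \<in> I" using fI by simp
    ultimately show ?thesis using True by simp
  next
    case False
    then have "sigmaI n I k = ?L2 ! (k - card I)" using k len1 by (simp add: sigmaI_def nth_append)
    moreover have "k - card I < length ?L2" using lenL len1 k False by simp
    then have "?L2 ! (k - card I) \<in> set ?L2" by (rule nth_mem)
    then have "?L2 ! (k - card I) \<in> {..<n} - I" by simp
    ultimately have "sigmaI n I k \<notin> I" by simp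
    then show ?thesis using False by simp
  qed
qed

lemma spm_in_signed_perms:
  assumes p: "p permutes {..<n}" and s: "\<And>j. j < n \<Longrightarrow> s j \<in> {1,-1}"
  shows "spm n p s \<in> signed_perms n"
proof -
  let ?e = "\<lambda>i. s (inv_into UNIV p i)"
  have E: "sdiag n ?e \<in> sign_diags n"
  proof (rule sdiag_in_sign_diags)
    fix i assume "i < n"
    then have "inv_into UNIV p i < n" using permutes_in_image[OF permutes_inv[OF p], of i] by simp
    then show "?e i \<in> {1,-1}" using s by blast
  qed
  have "sdiag n ?e * perm_mat n p = mat n n (\<lambda>(i,j). ?e i * spm n p (\<lambda>_. 1) $$ (i,j))"
    unfolding perm_mat_spm by (rule sdiag_mult_left) simp
  also have "\<dots> = spm n p s"
    unfolding spm_def by (rule eq_matI) (auto simp: permutes_inverses(2)[OF p])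
  finally have eq: "sdiag n ?e * perm_mat n p = spm n p s" .
  show ?thesis unfolding signed_perms_def
    by (rule CollectI, rule exI[of _ "sdiag n ?e"], rule exI[of _ p]) (use eq E p in simp)
qed

lemma rows_from_mat:
  assumes D: "D \<in> carrier_mat n n"
  shows "rows_from i D = mat (n - i) n (\<lambda>(a,j). D $$ (i + a, j))"
proof (rule eq_matI)
  show "dim_row (rows_from i D) = dim_row (mat (n - i) n (\<lambda>(a,j). D $$ (i + a, j)))"
    using D by (simp add: rows_from_def)
  show "dim_col (rows_from i D) = dim_col (mat (n - i) n (\<lambda>(a,j). D $$ (i + a, j)))"
    using D by (simp add: rows_from_def)
  fix a j assume "a < dim_row (mat (n - i) n (\<lambda>(a,j). D $$ (i + a, j)))"
    "j < dim_col (mat (n - i) n (\<lambda>(a,j). D $$ (i + a, j)))"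
  then have aj: "a < n - i" "j < n" by auto
  have "rows_from i D $$ (a,j) = drop i (rows D) ! a $ j"
    unfolding rows_from_def using D aj by (intro mat_of_rows_index) auto
  also have "\<dots> = D $$ (i + a, j)" using D aj by simp
  finally show "rows_from i D $$ (a,j) = mat (n - i) n (\<lambda>(a,j). D $$ (i + a, j)) $$ (a,j)"
    using aj by simp
qed

definition NZ :: "int mat \<Rightarrow> nat \<Rightarrow> nat \<Rightarrow> nat set" where
  "NZ D n i = {j. j < n \<and> (\<exists>a < n - i. D $$ (i + a, j) \<noteq> 0)}"

lemma SPP_D:
  assumes "D \<in> SPP n"
  shows "D \<in> carrier_mat n n"
    "\<And>i j. i < n \<Longrightarrow> j < n \<Longrightarrow> D $$ (i,j) \<in> {-1,0,1}"
    "\<And>i j j'. i < n \<Longrightarrow> j < n \<Longrightarrow> j' < n \<Longrightarrow> D $$ (i,j) \<noteq> 0 \<Longrightarrow> D $$ (i,j') \<noteq> 0 \<Longrightarrow> j = j'"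
    "\<And>i i' j. i < n \<Longrightarrow> i' < n \<Longrightarrow> j < n \<Longrightarrow> D $$ (i,j) \<noteq> 0 \<Longrightarrow> D $$ (i',j) \<noteq> 0 \<Longrightarrow> i = i'"
proof -
  have S: "D \<in> carrier_mat n n \<and>
     (\<forall>i<n. \<forall>j<n. D $$ (i,j) \<in> {-1,0,1}) \<and>
     (\<forall>i<n. \<forall>j<n. \<forall>j'<n. D $$ (i,j) \<noteq> 0 \<longrightarrow> D $$ (i,j') \<noteq> 0 \<longrightarrow> j = j') \<and>
     (\<forall>j<n. \<forall>i<n. \<forall>i'<n. D $$ (i,j) \<noteq> 0 \<longrightarrow> D $$ (i',j) \<noteq> 0 \<longrightarrow> i = i')"
    using assms unfolding SPP_def by (rule CollectD)
  show "D \<in> carrier_mat n n" using S by (rule conjunct1)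
  show "\<And>i j. i < n \<Longrightarrow> j < n \<Longrightarrow> D $$ (i,j) \<in> {-1,0,1}" using S[THEN conjunct2, THEN conjunct1] by blast
  show "\<And>i j j'. i < n \<Longrightarrow> j < n \<Longrightarrow> j' < n \<Longrightarrow> D $$ (i,j) \<noteq> 0 \<Longrightarrow> D $$ (i,j') \<noteq> 0 \<Longrightarrow> j = j'"
    using S[THEN conjunct2, THEN conjunct2, THEN conjunct1] by blast
  show "\<And>i i' j. i < n \<Longrightarrow> i' < n \<Longrightarrow> j < n \<Longrightarrow> D $$ (i,j) \<noteq> 0 \<Longrightarrow> D $$ (i',j) \<noteq> 0 \<Longrightarrow> i = i'"
    using S[THEN conjunct2, THEN conjunct2, THEN conjunct2] by blast
qed

lemma rank_rows_from:
  assumes D: "D \<in> SPP n"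
  shows "int_rank (rows_from i D) = card (NZ D n i)"
proof (rule antisym)
  note DD = SPP_D[OF D]
  let ?R = "mat (n - i) n (\<lambda>(a,j). D $$ (i + a, j))"
  have R: "rows_from i D = ?R" by (rule rows_from_mat[OF DD(1)])
  have Rc: "?R \<in> carrier_mat (n - i) n" by simp
  have "int_rank ?R \<le> card {j. j < n \<and> (\<exists>a<n - i. ?R $$ (a,j) \<noteq> 0)}"
    by (rule int_rank_upper[OF Rc])
  also have "{j. j < n \<and> (\<exists>a<n - i. ?R $$ (a,j) \<noteq> 0)} = NZ D n i"
    unfolding NZ_def by auto
  finally show "int_rank (rows_from i D) \<le> card (NZ D n i)" using R by simp
  define r where "r j = (SOME a. a < n - i \<and> D $$ (i + a, j) \<noteq> 0)" for j
  have r: "r j < n - i \<and> ?R $$ (r j, j) \<noteq> 0" if "j \<in> NZ D n i" for j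
  proof -
    have ex: "\<exists>a. a < n - i \<and> D $$ (i + a, j) \<noteq> 0" using that unfolding NZ_def by auto
    have "r j < n - i \<and> D $$ (i + r j, j) \<noteq> 0" unfolding r_def by (rule someI_ex[OF ex])
    then show ?thesis using that unfolding NZ_def by auto
  qed
  have "card (NZ D n i) \<le> int_rank ?R"
  proof (rule int_rank_lower[OF Rc _ r])
    show "NZ D n i \<subseteq> {..<n}" unfolding NZ_def by auto
  next
    fix j j' assume jj: "j \<in> NZ D n i" "j' \<in> NZ D n i" "j' \<noteq> j"
    have j: "j < n" "j' < n" using jj unfolding NZ_def by auto
    have rj: "r j < n - i" "D $$ (i + r j, j) \<noteq> 0" using r[OF jj(1)] j by auto
    show "?R $$ (r j, j') = 0"
    proof (rule ccontr)
      assume "?R $$ (r j, j') \<noteq> 0"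
      then have "D $$ (i + r j, j') \<noteq> 0" using rj j by simp
      then have "j = j'" using DD(3)[of "i + r j" j j'] rj j by simp
      then show False using jj by simp
    qed
  qed
  then show "card (NZ D n i) \<le> int_rank (rows_from i D)" unfolding R .
qed

lemma NZ_step:
  assumes D: "D \<in> SPP n" and i: "i < n"
  shows "NZ D n i = NZ D n (Suc i) \<union> {j. j < n \<and> D $$ (i,j) \<noteq> 0}"
    and "NZ D n (Suc i) \<inter> {j. j < n \<and> D $$ (i,j) \<noteq> 0} = {}"
proof -
  show "NZ D n i = NZ D n (Suc i) \<union> {j. j < n \<and> D $$ (i,j) \<noteq> 0}"
  proof (intro Set.set_eqI iffI)
    fix j assume "j \<in> NZ D n i"
    then obtain a where a: "j < n" "a < n - i" "D $$ (i + a, j) \<noteq> 0" unfolding NZ_def by auto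
    show "j \<in> NZ D n (Suc i) \<union> {j. j < n \<and> D $$ (i,j) \<noteq> 0}"
    proof (cases a)
      case 0
      then show ?thesis using a by simp
    next
      case (Suc b)
      then have "b < n - Suc i" "D $$ (Suc i + b, j) \<noteq> 0" using a by auto
      then show ?thesis using a(1) unfolding NZ_def by blast
    qed
  next
    fix j assume "j \<in> NZ D n (Suc i) \<union> {j. j < n \<and> D $$ (i,j) \<noteq> 0}"
    then show "j \<in> NZ D n i"
    proof
      assume "j \<in> NZ D n (Suc i)"
      then obtain b where b: "j < n" "b < n - Suc i" "D $$ (Suc i + b, j) \<noteq> 0" unfolding NZ_def by auto
      then have "Suc b < n - i" "D $$ (i + Suc b, j) \<noteq> 0" by auto
      then show ?thesis using b(1) unfolding NZ_def by blast
    next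
      assume "j \<in> {j. j < n \<and> D $$ (i,j) \<noteq> 0}"
      then have "j < n" "0 < n - i" "D $$ (i + 0, j) \<noteq> 0" using i by auto
      then show ?thesis unfolding NZ_def by blast
    qed
  qed
  show "NZ D n (Suc i) \<inter> {j. j < n \<and> D $$ (i,j) \<noteq> 0} = {}"
  proof (rule ccontr)
    assume "\<not> ?thesis"
    then obtain j b where b: "j < n" "b < n - Suc i" "D $$ (Suc i + b, j) \<noteq> 0" "D $$ (i,j) \<noteq> 0"
      unfolding NZ_def by auto
    have "Suc i + b < n" using b(2) by simp
    then have "Suc i + b = i" using SPP_D(4)[OF D, of "Suc i + b" i j] i b by simp
    then show False by simp
  qed
qed

lemma ech_SPP:
  assumes D: "D \<in> SPP n"
  shows "ech D = {i. i < n \<and> (\<exists>j<n. D $$ (i,j) \<noteq> 0)}"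
proof (rule Set.set_eqI)
  fix i
  have dr: "dim_row D = n" using SPP_D(1)[OF D] by simp
  show "i \<in> ech D \<longleftrightarrow> i \<in> {i. i < n \<and> (\<exists>j<n. D $$ (i,j) \<noteq> 0)}"
  proof (cases "i < n")
    case False then show ?thesis unfolding ech_def dr by simp
  next
    case True
    let ?Z = "{j. j < n \<and> D $$ (i,j) \<noteq> 0}"
    have f1: "finite (NZ D n (Suc i))" unfolding NZ_def by simp
    have f2: "finite ?Z" by simp
    have "card (NZ D n i) = card (NZ D n (Suc i)) + card ?Z"
      unfolding NZ_step(1)[OF D True] by (rule card_Un_disjoint[OF f1 f2 NZ_step(2)[OF D True]])
    moreover have "0 < card ?Z \<longleftrightarrow> (\<exists>j<n. D $$ (i,j) \<noteq> 0)"
      using f2 by (simp add: card_gt_0_iff)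
    ultimately have "card (NZ D n (Suc i)) < card (NZ D n i) \<longleftrightarrow> (\<exists>j<n. D $$ (i,j) \<noteq> 0)"
      by simp
    then show ?thesis
      unfolding ech_def dr rank_rows_from[OF D] using True by simp
  qed
qed

definition Fe :: "nat \<Rightarrow> int mat \<Rightarrow> nat \<Rightarrow> nat \<Rightarrow> int" where
  "Fe m \<tau> i j = (if i < m then (if j < m then \<tau> $$ (i,j) else 0) else (if j < m then 0 else (if i = j then 1 else 0)))"
definition Ge :: "nat \<Rightarrow> nat \<Rightarrow> nat \<Rightarrow> int" where
  "Ge m i j = (if i < m \<and> i = j then 1 else 0)"

definition PT1 :: "nat \<Rightarrow> nat set \<Rightarrow> int mat \<Rightarrow> int mat" where
  "PT1 n I \<tau> = mat n n (\<lambda>(r,j). Fe (card I) \<tau> (inv_into UNIV (sigmaI n I) r) j)"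
definition PT2 :: "nat \<Rightarrow> nat set \<Rightarrow> int mat" where
  "PT2 n I = mat n n (\<lambda>(r,j). Ge (card I) (inv_into UNIV (sigmaI n I) r) j)"

lemma PT1_carrier[simp]: "PT1 n I \<tau> \<in> carrier_mat n n" by (simp add: PT1_def)
lemma PT2_carrier[simp]: "PT2 n I \<in> carrier_mat n n" by (simp add: PT2_def)
lemma PT1_index: "r < n \<Longrightarrow> j < n \<Longrightarrow> PT1 n I \<tau> $$ (r,j) = Fe (card I) \<tau> (inv_into UNIV (sigmaI n I) r) j"
  by (simp add: PT1_def)
lemma PT2_index: "r < n \<Longrightarrow> j < n \<Longrightarrow> PT2 n I $$ (r,j) = Ge (card I) (inv_into UNIV (sigmaI n I) r) j"
  by (simp add: PT2_def)

lemma card_le_n: "I \<subseteq> {..<n} \<Longrightarrow> card I \<le> n"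
  using card_mono[of "{..<n}" I] by simp

lemma isg_facts:
  assumes I: "I \<subseteq> {..<n}" and r: "r < n"
  shows "inv_into UNIV (sigmaI n I) r < n" "sigmaI n I (inv_into UNIV (sigmaI n I) r) = r"
    "inv_into UNIV (sigmaI n I) r < card I \<longleftrightarrow> r \<in> I"
proof -
  note p = sigmaI_facts(1)[OF I]
  show a: "inv_into UNIV (sigmaI n I) r < n"
    using permutes_in_image[OF permutes_inv[OF p], of r] r by simp
  show b: "sigmaI n I (inv_into UNIV (sigmaI n I) r) = r" by (rule permutes_inverses(1)[OF p])
  show "inv_into UNIV (sigmaI n I) r < card I \<longleftrightarrow> r \<in> I"
    using sigmaI_facts(2)[OF I a] b by simp
qed

lemma sg_facts:
  assumes I: "I \<subseteq> {..<n}" and k: "k < n"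
  shows "sigmaI n I k < n" "inv_into UNIV (sigmaI n I) (sigmaI n I k) = k"
proof -
  note p = sigmaI_facts(1)[OF I]
  show "sigmaI n I k < n" using permutes_in_image[OF p, of k] k by simp
  show "inv_into UNIV (sigmaI n I) (sigmaI n I k) = k" by (rule permutes_inverses(2)[OF p])
qed

lemma four_F:
  assumes "m \<le> n" "\<tau> \<in> carrier_mat m m"
  shows "four_block_mat \<tau> (0\<^sub>m m (n-m)) (0\<^sub>m (n-m) m) (1\<^sub>m (n-m)) = mat n n (\<lambda>(i,j). Fe m \<tau> i j)"
  by (rule eq_matI) (use assms in \<open>auto simp: Fe_def\<close>)

lemma four_G:
  assumes "m \<le> n"
  shows "four_block_mat (1\<^sub>m m) (0\<^sub>m m (n-m)) (0\<^sub>m (n-m) m) (0\<^sub>m (n-m) (n-m)) = mat n n (\<lambda>(i,j). Ge m i j)"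
  by (rule eq_matI) (use assms in \<open>auto simp: Ge_def\<close>)

lemma PhiI_split:
  assumes I: "I \<subseteq> {..<n}" and \<tau>: "\<tau> \<in> carrier_mat (card I) (card I)"
  shows "PhiI n I \<tau> = PT1 n I \<tau> @\<^sub>r PT2 n I"
proof -
  have m: "card I \<le> n" by (rule card_le_n[OF I])
  note p = sigmaI_facts(1)[OF I]
  let ?F = "mat n n (\<lambda>(i,j). Fe (card I) \<tau> i j)" and ?G = "mat n n (\<lambda>(i,j). Ge (card I) i j)"
  have "PhiI n I \<tau> = dblock n (perm_mat n (sigmaI n I)) * (?F @\<^sub>r ?G)"
    unfolding PhiI_def Let_def four_F[OF m \<tau>] four_G[OF m] ..
  also have "\<dots> = (perm_mat n (sigmaI n I) * ?F) @\<^sub>r (perm_mat n (sigmaI n I) * ?G)"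
    by (rule dblock_append) (auto simp: perm_mat_def)
  also have "perm_mat n (sigmaI n I) * ?F = mat n n (\<lambda>(i,j). 1 * ?F $$ (inv_into UNIV (sigmaI n I) i, j))"
    unfolding perm_mat_spm by (rule spm_mult_left[OF _ p]) simp
  also have "\<dots> = PT1 n I \<tau>"
    unfolding PT1_def by (rule eq_matI) (auto simp: isg_facts(1)[OF I])
  also have "perm_mat n (sigmaI n I) * ?G = mat n n (\<lambda>(i,j). 1 * ?G $$ (inv_into UNIV (sigmaI n I) i, j))"
    unfolding perm_mat_spm by (rule spm_mult_left[OF _ p]) simp
  also have "\<dots> = PT2 n I"
    unfolding PT2_def by (rule eq_matI) (auto simp: isg_facts(1)[OF I])
  finally show ?thesis .
qed

lemma SPP_intro:
  assumes "A \<in> carrier_mat n n"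
    and "\<And>i j. i < n \<Longrightarrow> j < n \<Longrightarrow> A $$ (i,j) \<in> {-1,0,1}"
    and "\<And>i j j'. i < n \<Longrightarrow> j < n \<Longrightarrow> j' < n \<Longrightarrow> A $$ (i,j) \<noteq> 0 \<Longrightarrow> A $$ (i,j') \<noteq> 0 \<Longrightarrow> j = j'"
    and "\<And>i i' j. i < n \<Longrightarrow> i' < n \<Longrightarrow> j < n \<Longrightarrow> A $$ (i,j) \<noteq> 0 \<Longrightarrow> A $$ (i',j) \<noteq> 0 \<Longrightarrow> i = i'"
  shows "A \<in> SPP n"
proof -
  have "A \<in> carrier_mat n n \<and>
     (\<forall>i<n. \<forall>j<n. A $$ (i,j) \<in> {-1,0,1}) \<and>
     (\<forall>i<n. \<forall>j<n. \<forall>j'<n. A $$ (i,j) \<noteq> 0 \<longrightarrow> A $$ (i,j') \<noteq> 0 \<longrightarrow> j = j') \<and>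
     (\<forall>j<n. \<forall>i<n. \<forall>i'<n. A $$ (i,j) \<noteq> 0 \<longrightarrow> A $$ (i',j) \<noteq> 0 \<longrightarrow> i = i')"
  proof (intro conjI allI impI)
    show "A \<in> carrier_mat n n" by fact
  next
    fix i j assume "i < n" "j < n" then show "A $$ (i,j) \<in> {-1,0,1}" by (rule assms(2))
  next
    fix i j j' assume "i < n" "j < n" "j' < n" "A $$ (i,j) \<noteq> 0" "A $$ (i,j') \<noteq> 0"
    then show "j = j'" by (rule assms(3))
  next
    fix i i' j assume "j < n" "i < n" "i' < n" "A $$ (i,j) \<noteq> 0" "A $$ (i',j) \<noteq> 0"
    then show "i = i'" using assms(4) by blast
  qed
  then show ?thesis unfolding SPP_def by (rule CollectI)
qed

lemma SPP_permrows:
  assumes p: "p permutes {..<n}"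
    and f01: "\<And>i j. i < n \<Longrightarrow> j < n \<Longrightarrow> f i j \<in> {-1,0,1}"
    and frow: "\<And>i j j'. i < n \<Longrightarrow> j < n \<Longrightarrow> j' < n \<Longrightarrow> f i j \<noteq> 0 \<Longrightarrow> f i j' \<noteq> 0 \<Longrightarrow> j = j'"
    and fcol: "\<And>i i' j. i < n \<Longrightarrow> i' < n \<Longrightarrow> j < n \<Longrightarrow> f i j \<noteq> 0 \<Longrightarrow> f i' j \<noteq> 0 \<Longrightarrow> i = i'"
  shows "mat n n (\<lambda>(r,j). f (inv_into UNIV p r) j) \<in> SPP n"
proof (rule SPP_intro)
  have ip: "inv_into UNIV p r < n" if "r < n" for r
    using permutes_in_image[OF permutes_inv[OF p], of r] that by simp
  show "mat n n (\<lambda>(r,j). f (inv_into UNIV p r) j) \<in> carrier_mat n n" by simp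
  fix i j assume "i < n" "j < n"
  then show "mat n n (\<lambda>(r,j). f (inv_into UNIV p r) j) $$ (i,j) \<in> {-1,0,1}"
    using f01 ip by simp
next
  have ip: "inv_into UNIV p r < n" if "r < n" for r
    using permutes_in_image[OF permutes_inv[OF p], of r] that by simp
  fix i j j' assume ij: "i < n" "j < n" "j' < n"
    "mat n n (\<lambda>(r,j). f (inv_into UNIV p r) j) $$ (i,j) \<noteq> 0"
    "mat n n (\<lambda>(r,j). f (inv_into UNIV p r) j) $$ (i,j') \<noteq> 0"
  then have "f (inv_into UNIV p i) j \<noteq> 0" "f (inv_into UNIV p i) j' \<noteq> 0" by auto
  then show "j = j'" using frow[OF ip[OF ij(1)] ij(2,3)] by blast
next
  have ip: "inv_into UNIV p r < n" if "r < n" for r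
    using permutes_in_image[OF permutes_inv[OF p], of r] that by simp
  fix i i' j assume ij: "i < n" "i' < n" "j < n"
    "mat n n (\<lambda>(r,j). f (inv_into UNIV p r) j) $$ (i,j) \<noteq> 0"
    "mat n n (\<lambda>(r,j). f (inv_into UNIV p r) j) $$ (i',j) \<noteq> 0"
  then have "f (inv_into UNIV p i) j \<noteq> 0" "f (inv_into UNIV p i') j \<noteq> 0" by auto
  then have "inv_into UNIV p i = inv_into UNIV p i'" using fcol[OF ip[OF ij(1)] ip[OF ij(2)] ij(3)] by blast
  then have "p (inv_into UNIV p i) = p (inv_into UNIV p i')" by simp
  then show "i = i'" unfolding permutes_inverses(1)[OF p] .
qed

lemma Fe_props:
  assumes \<tau>: "\<tau> \<in> SPP m" and mn: "m \<le> n"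
  shows "\<And>i j. i < n \<Longrightarrow> j < n \<Longrightarrow> Fe m \<tau> i j \<in> {-1,0,1}"
    "\<And>i j j'. i < n \<Longrightarrow> j < n \<Longrightarrow> j' < n \<Longrightarrow> Fe m \<tau> i j \<noteq> 0 \<Longrightarrow> Fe m \<tau> i j' \<noteq> 0 \<Longrightarrow> j = j'"
    "\<And>i i' j. i < n \<Longrightarrow> i' < n \<Longrightarrow> j < n \<Longrightarrow> Fe m \<tau> i j \<noteq> 0 \<Longrightarrow> Fe m \<tau> i' j \<noteq> 0 \<Longrightarrow> i = i'"
proof -
  note T = SPP_D[OF \<tau>]
  fix i j assume "i < n" "j < n"
  then show "Fe m \<tau> i j \<in> {-1,0,1}" using T(2)[of i j] by (auto simp: Fe_def)
next
  note T = SPP_D[OF \<tau>]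
  fix i j j' assume ij: "i < n" "j < n" "j' < n" "Fe m \<tau> i j \<noteq> 0" "Fe m \<tau> i j' \<noteq> 0"
  show "j = j'"
  proof (cases "i < m")
    case True
    then have "j < m" "j' < m" "\<tau> $$ (i,j) \<noteq> 0" "\<tau> $$ (i,j') \<noteq> 0" using ij by (auto simp: Fe_def split: if_splits)
    then show ?thesis using T(3)[of i j j'] True by blast
  next
    case False
    then have "i = j" "i = j'" using ij by (auto simp: Fe_def split: if_splits)
    then show ?thesis by simp
  qed
next
  note T = SPP_D[OF \<tau>]
  fix i i' j assume ij: "i < n" "i' < n" "j < n" "Fe m \<tau> i j \<noteq> 0" "Fe m \<tau> i' j \<noteq> 0"
  show "i = i'"
  proof (cases "j < m")
    case True
    then have "i < m" "i' < m" "\<tau> $$ (i,j) \<noteq> 0" "\<tau> $$ (i',j) \<noteq> 0" using ij by (auto simp: Fe_def split: if_splits)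
    then show ?thesis using T(4)[of i i' j] True by blast
  next
    case False
    then have "i = j" "i' = j" using ij by (auto simp: Fe_def split: if_splits)
    then show ?thesis by simp
  qed
qed

lemma PT1_SPP:
  assumes I: "I \<subseteq> {..<n}" and \<tau>: "\<tau> \<in> SPP (card I)"
  shows "PT1 n I \<tau> \<in> SPP n"
  unfolding PT1_def
  by (rule SPP_permrows[OF sigmaI_facts(1)[OF I] Fe_props[OF \<tau> card_le_n[OF I]]])

lemma PT2_SPP:
  assumes I: "I \<subseteq> {..<n}"
  shows "PT2 n I \<in> SPP n"
  unfolding PT2_def
  by (rule SPP_permrows[OF sigmaI_facts(1)[OF I]]) (auto simp: Ge_def split: if_splits)

lemma PT2_ech:
  assumes I: "I \<subseteq> {..<n}"
  shows "ech (PT2 n I) = I"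
proof -
  have "ech (PT2 n I) = {r. r < n \<and> (\<exists>j<n. PT2 n I $$ (r,j) \<noteq> 0)}" by (rule ech_SPP[OF PT2_SPP[OF I]])
  also have "\<dots> = I"
  proof (rule Set.set_eqI)
    fix r
    show "r \<in> {r. r < n \<and> (\<exists>j<n. PT2 n I $$ (r,j) \<noteq> 0)} \<longleftrightarrow> r \<in> I"
    proof (cases "r < n")
      case False then show ?thesis using I by auto
    next
      case True
      note f = isg_facts[OF I True]
      have "(\<exists>j<n. PT2 n I $$ (r,j) \<noteq> 0) \<longleftrightarrow> inv_into UNIV (sigmaI n I) r < card I"
        using f(1) True by (auto simp: PT2_index Ge_def split: if_splits)
      then show ?thesis using f(3) True by simp
    qed
  qed
  finally show ?thesis .
qed

lemma transpose_mult_index: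
  assumes A: "A \<in> carrier_mat n k" and B: "B \<in> carrier_mat n k'" and a: "a < k" and b: "b < k'"
  shows "(transpose_mat A * B) $$ (a,b) = (\<Sum>r\<in>{0..<n}. A $$ (r,a) * B $$ (r,b))"
  using A B a b by (simp add: scalar_prod_def)

lemma PT_prod:
  assumes I: "I \<subseteq> {..<n}" and \<tau>: "\<tau> \<in> carrier_mat (card I) (card I)"
  shows "transpose_mat (PT1 n I \<tau>) * PT2 n I = mat n n (\<lambda>(a,b). if a < card I \<and> b < card I then \<tau> $$ (b,a) else 0)"
proof (rule eq_matI)
  fix a b assume "a < dim_row (mat n n (\<lambda>(a,b). if a < card I \<and> b < card I then \<tau> $$ (b,a) else 0))"
    "b < dim_col (mat n n (\<lambda>(a,b). if a < card I \<and> b < card I then \<tau> $$ (b,a) else 0))"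
  then have ab: "a < n" "b < n" by auto
  have m: "card I \<le> n" by (rule card_le_n[OF I])
  have "(transpose_mat (PT1 n I \<tau>) * PT2 n I) $$ (a,b) = (\<Sum>r\<in>{0..<n}. PT1 n I \<tau> $$ (r,a) * PT2 n I $$ (r,b))"
    by (rule transpose_mult_index[OF PT1_carrier PT2_carrier ab])
  also have "\<dots> = (if a < card I \<and> b < card I then \<tau> $$ (b,a) else 0)"
  proof (cases "b < card I")
    case True
    have sb: "sigmaI n I b < n" "inv_into UNIV (sigmaI n I) (sigmaI n I b) = b" using sg_facts[OF I ab(2)] by auto
    have "(\<Sum>r\<in>{0..<n}. PT1 n I \<tau> $$ (r,a) * PT2 n I $$ (r,b)) = PT1 n I \<tau> $$ (sigmaI n I b,a) * PT2 n I $$ (sigmaI n I b,b)"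
    proof (rule sum_single)
      fix r assume r: "r \<in> {0..<n}" "r \<noteq> sigmaI n I b"
      have "inv_into UNIV (sigmaI n I) r \<noteq> b"
      proof
        assume "inv_into UNIV (sigmaI n I) r = b"
        then have "sigmaI n I (inv_into UNIV (sigmaI n I) r) = sigmaI n I b" by simp
        then show False using isg_facts(2)[OF I, of r] r by simp
      qed
      then show "PT1 n I \<tau> $$ (r,a) * PT2 n I $$ (r,b) = 0" using r ab by (simp add: PT2_index Ge_def)
    qed (use sb in auto)
    also have "\<dots> = (if a < card I \<and> b < card I then \<tau> $$ (b,a) else 0)"
      using sb ab True by (simp add: PT1_index PT2_index Fe_def Ge_def)
    finally show ?thesis .
  next
    case False
    have "(\<Sum>r\<in>{0..<n}. PT1 n I \<tau> $$ (r,a) * PT2 n I $$ (r,b)) = 0"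
      by (rule sum.neutral) (use False ab in \<open>auto simp: PT2_index Ge_def\<close>)
    then show ?thesis using False by simp
  qed
  finally show "(transpose_mat (PT1 n I \<tau>) * PT2 n I) $$ (a,b) = mat n n (\<lambda>(a,b). if a < card I \<and> b < card I then \<tau> $$ (b,a) else 0) $$ (a,b)"
    using ab by simp
qed (auto simp: PT1_def PT2_def)

lemma PT_sym:
  assumes I: "I \<subseteq> {..<n}" and \<tau>: "\<tau> \<in> carrier_mat (card I) (card I)" and sym: "transpose_mat \<tau> = \<tau>"
  shows "transpose_mat (transpose_mat (PT1 n I \<tau>) * PT2 n I) = transpose_mat (PT1 n I \<tau>) * PT2 n I"
  unfolding PT_prod[OF I \<tau>]
proof (rule eq_matI)
  fix a b assume ab: "a < dim_row (mat n n (\<lambda>(a,b). if a < card I \<and> b < card I then \<tau> $$ (b,a) else 0))"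
    "b < dim_col (mat n n (\<lambda>(a,b). if a < card I \<and> b < card I then \<tau> $$ (b,a) else 0))"
  have "a < card I \<Longrightarrow> b < card I \<Longrightarrow> \<tau> $$ (a,b) = \<tau> $$ (b,a)"
  proof -
    assume "a < card I" "b < card I"
    then have "transpose_mat \<tau> $$ (b,a) = \<tau> $$ (a,b)" using \<tau> by simp
    then show ?thesis using sym by simp
  qed
  then show "transpose_mat (mat n n (\<lambda>(a,b). if a < card I \<and> b < card I then \<tau> $$ (b,a) else 0)) $$ (a,b) =
    mat n n (\<lambda>(a,b). if a < card I \<and> b < card I then \<tau> $$ (b,a) else 0) $$ (a,b)"
    using ab by auto
qed auto

lemma int_rank_le_nc:
  assumes A: "A \<in> carrier_mat nr nc"
  shows "int_rank A \<le> nc"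
proof -
  have "int_rank A \<le> card {j. j < nc \<and> (\<exists>i<nr. A $$ (i,j) \<noteq> 0)}" by (rule int_rank_upper[OF A])
  also have "\<dots> \<le> card {..<nc}" by (rule card_mono) auto
  finally show ?thesis by simp
qed

lemma PT_rank:
  assumes I: "I \<subseteq> {..<n}"
  shows "int_rank (PT1 n I \<tau> @\<^sub>r PT2 n I) = n"
proof (rule antisym)
  let ?M = "PT1 n I \<tau> @\<^sub>r PT2 n I"
  have Mc: "?M \<in> carrier_mat (n + n) n" by auto
  show "int_rank ?M \<le> n" by (rule int_rank_le_nc[OF Mc])
  have Me: "?M = mat (n + n) n (\<lambda>(r,j). if r < n then PT1 n I \<tau> $$ (r,j) else PT2 n I $$ (r - n, j))"
    by (rule append_rows_mat) auto
  define rr where "rr j = (if j < card I then n + sigmaI n I j else sigmaI n I j)" for j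
  have "card {..<n} \<le> int_rank ?M"
  proof (rule int_rank_lower[OF Mc, of "{..<n}" rr])
    fix j assume j: "j \<in> {..<n}"
    note s = sg_facts[OF I, of j]
    show "rr j < n + n \<and> ?M $$ (rr j, j) \<noteq> 0"
      using j s unfolding Me rr_def by (auto simp: PT1_index PT2_index Fe_def Ge_def)
  next
    fix j j' assume j: "j \<in> {..<n}" "j' \<in> {..<n}" "j' \<noteq> j"
    note s = sg_facts[OF I, of j]
    show "?M $$ (rr j, j') = 0"
      using j s unfolding Me rr_def by (auto simp: PT1_index PT2_index Fe_def Ge_def)
  qed simp
  then show "n \<le> int_rank ?M" by simp
qed

lemma PhiI_in_OmegaI:
  assumes I: "I \<subseteq> {..<n}" and \<tau>: "\<tau> \<in> SPI (card I)"
  shows "PhiI n I \<tau> \<in> OmegaI n I"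
proof -
  have \<tau>s: "\<tau> \<in> SPP (card I)" "transpose_mat \<tau> = \<tau>" using \<tau> unfolding SPI_def by auto
  have \<tau>c: "\<tau> \<in> carrier_mat (card I) (card I)" by (rule SPP_D(1)[OF \<tau>s(1)])
  have O: "PT1 n I \<tau> @\<^sub>r PT2 n I \<in> Omega0 n"
    unfolding Omega0_def
    by (rule CollectI, rule exI[of _ "PT1 n I \<tau>"], rule exI[of _ "PT2 n I"])
      (simp add: PT1_SPP[OF I \<tau>s(1)] PT2_SPP[OF I] PT_sym[OF I \<tau>c \<tau>s(2)] PT_rank[OF I])
  show ?thesis
    unfolding OmegaI_def PhiI_split[OF I \<tau>c]
    by (rule CollectI, rule exI[of _ "PT1 n I \<tau>"], rule exI[of _ "PT2 n I"])
      (simp add: O PT2_ech[OF I])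
qed

lemma quotient_bij:
  assumes eR: "equiv A R" and eS: "equiv B S"
    and f: "\<And>a. a \<in> A \<Longrightarrow> f a \<in> B"
    and comp: "\<And>a a'. (a,a') \<in> R \<Longrightarrow> (f a, f a') \<in> S"
    and refl: "\<And>a a'. a \<in> A \<Longrightarrow> a' \<in> A \<Longrightarrow> (f a, f a') \<in> S \<Longrightarrow> (a,a') \<in> R"
    and sur: "\<And>b. b \<in> B \<Longrightarrow> \<exists>a\<in>A. (f a, b) \<in> S"
  shows "bij_betw (\<lambda>X. S `` (f ` X)) (A // R) (B // S)"
proof -
  have key: "S `` (f ` (R `` {a})) = S `` {f a}" if a: "a \<in> A" for a
  proof (rule Set.set_eqI, rule iffI)
    fix y assume "y \<in> S `` (f ` (R `` {a}))"
    then obtain a' where a': "(a,a') \<in> R" "(f a', y) \<in> S" by auto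
    have "(f a, f a') \<in> S" by (rule comp[OF a'(1)])
    then have "(f a, y) \<in> S" using a'(2) eS unfolding equiv_def trans_def by blast
    then show "y \<in> S `` {f a}" by simp
  next
    fix y assume "y \<in> S `` {f a}"
    moreover have "a \<in> R `` {a}" by (rule equiv_class_self[OF eR a])
    ultimately show "y \<in> S `` (f ` (R `` {a}))" by auto
  qed
  show ?thesis
    unfolding bij_betw_def
  proof
    show "inj_on (\<lambda>X. S `` (f ` X)) (A // R)"
    proof (rule inj_onI)
      fix X Y assume X: "X \<in> A // R" and Y: "Y \<in> A // R" and eq: "S `` (f ` X) = S `` (f ` Y)"
      obtain a where a: "X = R `` {a}" "a \<in> A" using X by (rule quotientE)
      obtain b where b: "Y = R `` {b}" "b \<in> A" using Y by (rule quotientE)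
      have "S `` {f a} = S `` {f b}" using eq key[OF a(2)] key[OF b(2)] a(1) b(1) by simp
      then have "(f a, f b) \<in> S" using eq_equiv_class_iff[OF eS f[OF a(2)] f[OF b(2)]] by simp
      then have "(a, b) \<in> R" by (rule refl[OF a(2) b(2)])
      then show "X = Y" using a b eq_equiv_class_iff[OF eR a(2) b(2)] by simp
    qed
  next
    show "(\<lambda>X. S `` (f ` X)) ` (A // R) = B // S"
    proof (rule Set.set_eqI, rule iffI)
      fix Z assume "Z \<in> (\<lambda>X. S `` (f ` X)) ` (A // R)"
      then obtain X where X: "X \<in> A // R" "Z = S `` (f ` X)" by blast
      obtain a where a: "X = R `` {a}" "a \<in> A" using X(1) by (rule quotientE)
      have "Z = S `` {f a}" using X(2) a key[OF a(2)] by simp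
      then show "Z \<in> B // S" using quotientI[OF f[OF a(2)]] by simp
    next
      fix Z assume "Z \<in> B // S"
      then obtain b where b: "Z = S `` {b}" "b \<in> B" by (rule quotientE)
      obtain a where a: "a \<in> A" "(f a, b) \<in> S" using sur[OF b(2)] by blast
      have "S `` {f a} = S `` {b}" using eq_equiv_class_iff[OF eS f[OF a(1)] b(2)] a(2) by simp
      then have "Z = S `` (f ` (R `` {a}))" using b(1) key[OF a(1)] by simp
      moreover have "R `` {a} \<in> A // R" by (rule quotientI[OF a(1)])
      ultimately show "Z \<in> (\<lambda>X. S `` (f ` X)) ` (A // R)" by blast
    qed
  qed
qed

definition dd :: "nat \<Rightarrow> int mat \<Rightarrow> nat \<Rightarrow> int" where
  "dd n E r = (if r < n then E $$ (r,r) else E $$ (r - n, r - n))"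

lemma act_formula:
  assumes E: "E \<in> sign_diags n" and p: "p permutes {..<n}" and w: "\<omega> \<in> carrier_mat (n + n) n"
  shows "dblock n E * \<omega> * spm n p s = mat (n + n) n (\<lambda>(r,j). dd n E r * \<omega> $$ (r, p j) * s j)"
proof -
  have "dblock n E = sdiag (n + n) (dd n E)"
    unfolding dd_def by (subst sign_diags_sdiag[OF E]) (rule dblock_sdiag)
  then have "dblock n E * \<omega> = mat (n + n) n (\<lambda>(i,j). dd n E i * \<omega> $$ (i,j))"
    using sdiag_mult_left[OF w] by simp
  moreover have "mat (n + n) n (\<lambda>(i,j). dd n E i * \<omega> $$ (i,j)) * spm n p s =
     mat (n + n) n (\<lambda>(i,j). mat (n + n) n (\<lambda>(i,j). dd n E i * \<omega> $$ (i,j)) $$ (i, p j) * s j)"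
    by (rule spm_mult_right[OF _ p]) simp
  moreover have "mat (n + n) n (\<lambda>(i,j). mat (n + n) n (\<lambda>(i,j). dd n E i * \<omega> $$ (i,j)) $$ (i, p j) * s j)
     = mat (n + n) n (\<lambda>(r,j). dd n E r * \<omega> $$ (r, p j) * s j)"
  proof (rule eq_matI)
    fix i j assume ij: "i < dim_row (mat (n + n) n (\<lambda>(r,j). dd n E r * \<omega> $$ (r, p j) * s j))"
      "j < dim_col (mat (n + n) n (\<lambda>(r,j). dd n E r * \<omega> $$ (r, p j) * s j))"
    then have "p j < n" using permutes_in_image[OF p, of j] by simp
    then show "mat (n + n) n (\<lambda>(i,j). mat (n + n) n (\<lambda>(i,j). dd n E i * \<omega> $$ (i,j)) $$ (i, p j) * s j) $$ (i,j)
      = mat (n + n) n (\<lambda>(r,j). dd n E r * \<omega> $$ (r, p j) * s j) $$ (i,j)" using ij by simp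
  qed auto
  ultimately show ?thesis by simp
qed

lemma dd_sign: "E \<in> sign_diags n \<Longrightarrow> r < n + n \<Longrightarrow> dd n E r \<in> {1,-1}"
  unfolding dd_def using sign_diags_entry[of E n] by auto

lemma OmegaI_carrier:
  assumes "\<omega> \<in> OmegaI n I"
  shows "\<omega> \<in> carrier_mat (n + n) n"
proof -
  obtain t1 t2 where "\<omega> = t1 @\<^sub>r t2" "t1 \<in> carrier_mat n n" "t2 \<in> carrier_mat n n"
    using assms unfolding OmegaI_def by auto
  then show ?thesis by auto
qed

lemma Omega_relI:
  assumes "\<omega> \<in> OmegaI n I" "\<omega>' \<in> OmegaI n I" "E \<in> sign_diags n" "G \<in> signed_perms n"
    "\<omega>' = dblock n E * \<omega> * G"
  shows "(\<omega>, \<omega>') \<in> Omega_rel n I"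
  unfolding Omega_rel_def using assms by auto

lemma Omega_relD:
  assumes "(\<omega>, \<omega>') \<in> Omega_rel n I"
  shows "\<omega> \<in> OmegaI n I" "\<omega>' \<in> OmegaI n I"
    "\<exists>E p s. E \<in> sign_diags n \<and> p permutes {..<n} \<and> (\<forall>j<n. s j \<in> {1,-1}) \<and>
       \<omega>' = mat (n + n) n (\<lambda>(r,j). dd n E r * \<omega> $$ (r, p j) * s j)"
proof -
  show w: "\<omega> \<in> OmegaI n I" "\<omega>' \<in> OmegaI n I" using assms unfolding Omega_rel_def by auto
  obtain E G where EG: "E \<in> sign_diags n" "G \<in> signed_perms n" "\<omega>' = dblock n E * \<omega> * G"
    using assms unfolding Omega_rel_def by auto
  obtain p s where ps: "p permutes {..<n}" "\<forall>j<n. s j \<in> {1,-1}" "G = spm n p s"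
    using signed_perms_spm[OF EG(2)] by blast
  have "\<omega>' = mat (n + n) n (\<lambda>(r,j). dd n E r * \<omega> $$ (r, p j) * s j)"
    using EG(3) ps(3) act_formula[OF EG(1) ps(1) OmegaI_carrier[OF w(1)]] by simp
  then show "\<exists>E p s. E \<in> sign_diags n \<and> p permutes {..<n} \<and> (\<forall>j<n. s j \<in> {1,-1}) \<and>
       \<omega>' = mat (n + n) n (\<lambda>(r,j). dd n E r * \<omega> $$ (r, p j) * s j)"
    using EG(1) ps(1,2) by blast
qed

lemma Omega_relI2:
  assumes "\<omega> \<in> OmegaI n I" "\<omega>' \<in> OmegaI n I" "E \<in> sign_diags n" "p permutes {..<n}"
    "\<And>j. j < n \<Longrightarrow> s j \<in> {1,-1}"
    "\<omega>' = mat (n + n) n (\<lambda>(r,j). dd n E r * \<omega> $$ (r, p j) * s j)"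
  shows "(\<omega>, \<omega>') \<in> Omega_rel n I"
proof (rule Omega_relI[OF assms(1,2,3) spm_in_signed_perms[OF assms(4,5)]])
  show "\<omega>' = dblock n E * \<omega> * spm n p s"
    using act_formula[OF assms(3,4) OmegaI_carrier[OF assms(1)]] assms(6) by simp
qed

lemma spi_formula:
  assumes E: "E \<in> sign_diags m" and \<tau>: "\<tau> \<in> carrier_mat m m"
  shows "E * \<tau> * E = mat m m (\<lambda>(i,j). E $$ (i,i) * \<tau> $$ (i,j) * E $$ (j,j))"
proof -
  have E': "E = sdiag m (\<lambda>i. E $$ (i,i))" by (rule sign_diags_sdiag[OF E])
  have "sdiag m (\<lambda>i. E $$ (i,i)) * \<tau> = mat m m (\<lambda>(i,j). E $$ (i,i) * \<tau> $$ (i,j))"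
    by (rule sdiag_mult_left[OF \<tau>])
  moreover have "mat m m (\<lambda>(i,j). E $$ (i,i) * \<tau> $$ (i,j)) * sdiag m (\<lambda>i. E $$ (i,i)) =
    mat m m (\<lambda>(i,j). mat m m (\<lambda>(i,j). E $$ (i,i) * \<tau> $$ (i,j)) $$ (i,j) * E $$ (j,j))"
    by (rule sdiag_mult_right) simp
  moreover have "mat m m (\<lambda>(i,j). mat m m (\<lambda>(i,j). E $$ (i,i) * \<tau> $$ (i,j)) $$ (i,j) * E $$ (j,j)) =
    mat m m (\<lambda>(i,j). E $$ (i,i) * \<tau> $$ (i,j) * E $$ (j,j))"
    by (rule eq_matI) auto
  ultimately have "sdiag m (\<lambda>i. E $$ (i,i)) * \<tau> * sdiag m (\<lambda>i. E $$ (i,i)) = mat m m (\<lambda>(i,j). E $$ (i,i) * \<tau> $$ (i,j) * E $$ (j,j))"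
    by simp
  then show ?thesis using E' by simp
qed

lemma sq_sign: "(x::int) \<in> {1,-1} \<Longrightarrow> x * x = 1" by auto

lemma equiv_SPI_rel: "equiv (SPI m) (SPI_rel m)"
proof (rule equivI)
  show "SPI_rel m \<subseteq> SPI m \<times> SPI m" unfolding SPI_rel_def by auto
next
  show "refl_on (SPI m) (SPI_rel m)"
  proof (rule refl_onI)
    fix \<tau> assume t: "\<tau> \<in> SPI m"
    have tc: "\<tau> \<in> carrier_mat m m" using t SPP_D(1) unfolding SPI_def by auto
    have E: "sdiag m (\<lambda>_. 1) \<in> sign_diags m" by (rule sdiag_in_sign_diags) simp
    have "sdiag m (\<lambda>_. 1) * \<tau> * sdiag m (\<lambda>_. 1) = mat m m (\<lambda>(i,j). sdiag m (\<lambda>_. 1) $$ (i,i) * \<tau> $$ (i,j) * sdiag m (\<lambda>_. 1) $$ (j,j))"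
      by (rule spi_formula[OF E tc])
    also have "\<dots> = \<tau>" using tc by (intro eq_matI) (auto simp: sdiag_def)
    finally have "\<tau> = sdiag m (\<lambda>_. 1) * \<tau> * sdiag m (\<lambda>_. 1)" by simp
    then show "(\<tau>, \<tau>) \<in> SPI_rel m" unfolding SPI_rel_def using t E by auto
  qed
next
  show "sym (SPI_rel m)"
  proof (rule symI)
    fix \<tau> \<tau>' assume "(\<tau>, \<tau>') \<in> SPI_rel m"
    then obtain E where t: "\<tau> \<in> SPI m" "\<tau>' \<in> SPI m" and E: "E \<in> sign_diags m" and eq: "\<tau>' = E * \<tau> * E"
      unfolding SPI_rel_def by auto
    have tc: "\<tau> \<in> carrier_mat m m" "\<tau>' \<in> carrier_mat m m" using t SPP_D(1) unfolding SPI_def by auto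
    have "E * \<tau>' * E = mat m m (\<lambda>(i,j). E $$ (i,i) * \<tau>' $$ (i,j) * E $$ (j,j))" by (rule spi_formula[OF E tc(2)])
    also have "\<dots> = \<tau>"
    proof (rule eq_matI)
      fix i j assume "i < dim_row \<tau>" "j < dim_col \<tau>"
      then have ij: "i < m" "j < m" using tc by auto
      have "\<tau>' $$ (i,j) = E $$ (i,i) * \<tau> $$ (i,j) * E $$ (j,j)" using eq spi_formula[OF E tc(1)] ij by simp
      moreover have "E $$ (i,i) * E $$ (i,i) = 1" "E $$ (j,j) * E $$ (j,j) = 1"
        using sq_sign sign_diags_entry[OF E] ij by auto
      ultimately show "mat m m (\<lambda>(i,j). E $$ (i,i) * \<tau>' $$ (i,j) * E $$ (j,j)) $$ (i,j) = \<tau> $$ (i,j)"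
        using ij by (simp add: algebra_simps)
    qed (use tc in auto)
    finally show "(\<tau>', \<tau>) \<in> SPI_rel m" unfolding SPI_rel_def using t E by auto
  qed
next
  show "trans (SPI_rel m)"
  proof (rule transI)
    fix \<tau> \<tau>' \<tau>'' assume "(\<tau>, \<tau>') \<in> SPI_rel m" "(\<tau>', \<tau>'') \<in> SPI_rel m"
    then obtain E F where t: "\<tau> \<in> SPI m" "\<tau>' \<in> SPI m" "\<tau>'' \<in> SPI m" and E: "E \<in> sign_diags m"
      and F: "F \<in> sign_diags m" and eq: "\<tau>' = E * \<tau> * E" "\<tau>'' = F * \<tau>' * F"
      unfolding SPI_rel_def by auto
    have tc: "\<tau> \<in> carrier_mat m m" "\<tau>' \<in> carrier_mat m m" using t SPP_D(1) unfolding SPI_def by auto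
    let ?G = "sdiag m (\<lambda>i. F $$ (i,i) * E $$ (i,i))"
    have G: "?G \<in> sign_diags m"
    proof (rule sdiag_in_sign_diags)
      fix i assume i: "i < m"
      have "F $$ (i,i) \<in> {1,-1}" "E $$ (i,i) \<in> {1,-1}" using sign_diags_entry E F i by auto
      then show "F $$ (i,i) * E $$ (i,i) \<in> {1,-1}" by auto
    qed
    have "?G * \<tau> * ?G = mat m m (\<lambda>(i,j). ?G $$ (i,i) * \<tau> $$ (i,j) * ?G $$ (j,j))" by (rule spi_formula[OF G tc(1)])
    also have "\<dots> = \<tau>''"
    proof (rule eq_matI)
      have t3: "\<tau>'' \<in> carrier_mat m m" using t(3) SPP_D(1) unfolding SPI_def by auto
      fix i j assume "i < dim_row \<tau>''" "j < dim_col \<tau>''"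
      then have ij: "i < m" "j < m" using t3 by auto
      have "\<tau>' $$ (i,j) = E $$ (i,i) * \<tau> $$ (i,j) * E $$ (j,j)" using eq(1) spi_formula[OF E tc(1)] ij by simp
      moreover have "\<tau>'' $$ (i,j) = F $$ (i,i) * \<tau>' $$ (i,j) * F $$ (j,j)" using eq(2) spi_formula[OF F tc(2)] ij by simp
      ultimately show "mat m m (\<lambda>(i,j). ?G $$ (i,i) * \<tau> $$ (i,j) * ?G $$ (j,j)) $$ (i,j) = \<tau>'' $$ (i,j)"
        using ij by (simp add: sdiag_def algebra_simps)
    qed (use t(3) SPP_D(1) in \<open>auto simp: SPI_def\<close>)
    finally show "(\<tau>, \<tau>'') \<in> SPI_rel m" unfolding SPI_rel_def using t G by auto
  qed
qed

lemma equiv_Omega_rel: "equiv (OmegaI n I) (Omega_rel n I)"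
proof (rule equivI)
  show "Omega_rel n I \<subseteq> OmegaI n I \<times> OmegaI n I" unfolding Omega_rel_def by auto
next
  show "refl_on (OmegaI n I) (Omega_rel n I)"
  proof (rule refl_onI)
    fix \<omega> assume w: "\<omega> \<in> OmegaI n I"
    have wc: "\<omega> \<in> carrier_mat (n + n) n" by (rule OmegaI_carrier[OF w])
    have E: "sdiag n (\<lambda>_. 1) \<in> sign_diags n" by (rule sdiag_in_sign_diags) simp
    have "\<omega> = mat (n + n) n (\<lambda>(r,j). dd n (sdiag n (\<lambda>_. 1)) r * \<omega> $$ (r, id j) * 1)"
      using wc by (intro eq_matI) (auto simp: dd_def sdiag_def)
    then show "(\<omega>, \<omega>) \<in> Omega_rel n I"
      by (intro Omega_relI2[OF w w E permutes_id]) auto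
  qed
next
  show "sym (Omega_rel n I)"
  proof (rule symI)
    fix \<omega> \<omega>' assume r: "(\<omega>, \<omega>') \<in> Omega_rel n I"
    note w = Omega_relD(1,2)[OF r]
    obtain E p s where E: "E \<in> sign_diags n" and p: "p permutes {..<n}" and s: "\<forall>j<n. s j \<in> {1,-1}"
      and eq: "\<omega>' = mat (n + n) n (\<lambda>(r,j). dd n E r * \<omega> $$ (r, p j) * s j)"
      using Omega_relD(3)[OF r] by blast
    have wc: "\<omega> \<in> carrier_mat (n + n) n" by (rule OmegaI_carrier[OF w(1)])
    have ip: "inv_into UNIV p j < n" if "j < n" for j
      using permutes_in_image[OF permutes_inv[OF p], of j] that by simp
    have "\<omega> = mat (n + n) n (\<lambda>(r,j). dd n E r * \<omega>' $$ (r, inv_into UNIV p j) * s (inv_into UNIV p j))"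
    proof (rule eq_matI)
      fix r j assume rj: "r < dim_row (mat (n + n) n (\<lambda>(r,j). dd n E r * \<omega>' $$ (r, inv_into UNIV p j) * s (inv_into UNIV p j)))"
        "j < dim_col (mat (n + n) n (\<lambda>(r,j). dd n E r * \<omega>' $$ (r, inv_into UNIV p j) * s (inv_into UNIV p j)))"
      then have rj': "r < n + n" "j < n" by auto
      have e1: "\<omega>' $$ (r, inv_into UNIV p j) = dd n E r * \<omega> $$ (r, j) * s (inv_into UNIV p j)"
        using eq rj' ip[OF rj'(2)] permutes_inverses(1)[OF p] by simp
      have d: "dd n E r * dd n E r = 1" by (rule sq_sign[OF dd_sign[OF E rj'(1)]])
      have ss: "s (inv_into UNIV p j) * s (inv_into UNIV p j) = 1" using sq_sign s ip[OF rj'(2)] by blast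
      have "dd n E r * (dd n E r * \<omega> $$ (r, j) * s (inv_into UNIV p j)) * s (inv_into UNIV p j)
         = (dd n E r * dd n E r) * \<omega> $$ (r, j) * (s (inv_into UNIV p j) * s (inv_into UNIV p j))"
        by (simp add: algebra_simps)
      also have "\<dots> = \<omega> $$ (r,j)" using d ss by simp
      finally show "\<omega> $$ (r,j) = mat (n + n) n (\<lambda>(r,j). dd n E r * \<omega>' $$ (r, inv_into UNIV p j) * s (inv_into UNIV p j)) $$ (r,j)"
        using rj' e1 by simp
    qed (use wc in auto)
    then show "(\<omega>', \<omega>) \<in> Omega_rel n I"
      by (intro Omega_relI2[OF w(2) w(1) E permutes_inv[OF p]]) (use s ip in auto)
  qed
next
  show "trans (Omega_rel n I)"
  proof (rule transI)
    fix \<omega> \<omega>' \<omega>'' assume r1: "(\<omega>, \<omega>') \<in> Omega_rel n I" and r2: "(\<omega>', \<omega>'') \<in> Omega_rel n I"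
    note w = Omega_relD(1,2)[OF r1] Omega_relD(2)[OF r2]
    obtain E p s where E: "E \<in> sign_diags n" and p: "p permutes {..<n}" and s: "\<forall>j<n. s j \<in> {1,-1}"
      and eq1: "\<omega>' = mat (n + n) n (\<lambda>(r,j). dd n E r * \<omega> $$ (r, p j) * s j)"
      using Omega_relD(3)[OF r1] by blast
    obtain F q t where F: "F \<in> sign_diags n" and q: "q permutes {..<n}" and t: "\<forall>j<n. t j \<in> {1,-1}"
      and eq2: "\<omega>'' = mat (n + n) n (\<lambda>(r,j). dd n F r * \<omega>' $$ (r, q j) * t j)"
      using Omega_relD(3)[OF r2] by blast
    let ?G = "sdiag n (\<lambda>i. F $$ (i,i) * E $$ (i,i))"
    have G: "?G \<in> sign_diags n"
    proof (rule sdiag_in_sign_diags)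
      fix i assume i: "i < n"
      have "F $$ (i,i) \<in> {1,-1}" "E $$ (i,i) \<in> {1,-1}" using sign_diags_entry E F i by auto
      then show "F $$ (i,i) * E $$ (i,i) \<in> {1,-1}" by auto
    qed
    have dG: "dd n ?G r = dd n F r * dd n E r" if "r < n + n" for r
      using that by (auto simp: dd_def sdiag_def)
    have qn: "q j < n" if "j < n" for j using permutes_in_image[OF q, of j] that by simp
    have "\<omega>'' = mat (n + n) n (\<lambda>(r,j). dd n ?G r * \<omega> $$ (r, (p \<circ> q) j) * (s (q j) * t j))"
    proof (rule eq_matI)
      fix r j assume rj: "r < dim_row (mat (n + n) n (\<lambda>(r,j). dd n ?G r * \<omega> $$ (r, (p \<circ> q) j) * (s (q j) * t j)))"
        "j < dim_col (mat (n + n) n (\<lambda>(r,j). dd n ?G r * \<omega> $$ (r, (p \<circ> q) j) * (s (q j) * t j)))"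
      then have rj': "r < n + n" "j < n" by auto
      have "\<omega>'' $$ (r,j) = dd n F r * (dd n E r * \<omega> $$ (r, p (q j)) * s (q j)) * t j"
        using eq1 eq2 rj' qn[OF rj'(2)] by simp
      also have "\<dots> = dd n ?G r * \<omega> $$ (r, (p \<circ> q) j) * (s (q j) * t j)"
        using dG[OF rj'(1)] by (simp add: algebra_simps)
      finally show "\<omega>'' $$ (r,j) = mat (n + n) n (\<lambda>(r,j). dd n ?G r * \<omega> $$ (r, (p \<circ> q) j) * (s (q j) * t j)) $$ (r,j)"
        using rj' by simp
    qed (use eq2 in auto)
    moreover have "\<And>j. j < n \<Longrightarrow> s (q j) * t j \<in> {1,-1}"
    proof -
      fix j assume j: "j < n"
      have "s (q j) \<in> {1,-1}" "t j \<in> {1,-1}" using s t qn[OF j] j by auto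
      then show "s (q j) * t j \<in> {1,-1}" by auto
    qed
    ultimately show "(\<omega>, \<omega>'') \<in> Omega_rel n I"
      using Omega_relI2[OF w(1) w(3) G permutes_compose[OF q p], of "\<lambda>j. s (q j) * t j"] by blast
  qed
qed

lemma PhiI_mat:
  assumes I: "I \<subseteq> {..<n}" and \<tau>: "\<tau> \<in> carrier_mat (card I) (card I)"
  shows "PhiI n I \<tau> = mat (n + n) n (\<lambda>(r,j). if r < n then Fe (card I) \<tau> (inv_into UNIV (sigmaI n I) r) j
     else Ge (card I) (inv_into UNIV (sigmaI n I) (r - n)) j)"
  unfolding PhiI_split[OF I \<tau>] append_rows_mat[OF PT1_carrier PT2_carrier]
  by (rule eq_matI) (auto simp: PT1_index PT2_index)

lemma SPI_carrier: "\<tau> \<in> SPI m \<Longrightarrow> \<tau> \<in> carrier_mat m m"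
  unfolding SPI_def using SPP_D(1) by auto

lemma compat:
  assumes I: "I \<subseteq> {..<n}" and r: "(\<tau>, \<tau>') \<in> SPI_rel (card I)"
  shows "(PhiI n I \<tau>, PhiI n I \<tau>') \<in> Omega_rel n I"
proof -
  obtain Ee where t: "\<tau> \<in> SPI (card I)" "\<tau>' \<in> SPI (card I)" and Ee: "Ee \<in> sign_diags (card I)"
    and eq: "\<tau>' = Ee * \<tau> * Ee"
    using r unfolding SPI_rel_def by auto
  have tc: "\<tau> \<in> carrier_mat (card I) (card I)" "\<tau>' \<in> carrier_mat (card I) (card I)"
    using t SPI_carrier by auto
  define g where "g j = (if j < card I then Ee $$ (j,j) else 1)" for j
  have g: "g j \<in> {1,-1}" for j using sign_diags_entry[OF Ee, of j] unfolding g_def by auto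
  have gg: "g j * g j = 1" for j using sq_sign[OF g] .
  let ?isg = "inv_into UNIV (sigmaI n I)"
  let ?E = "sdiag n (\<lambda>r. g (?isg r))"
  have E: "?E \<in> sign_diags n" by (rule sdiag_in_sign_diags) (use g in auto)
  have \<tau>'e: "\<tau>' $$ (i,j) = Ee $$ (i,i) * \<tau> $$ (i,j) * Ee $$ (j,j)" if "i < card I" "j < card I" for i j
    using eq spi_formula[OF Ee tc(1)] that by simp
  have "PhiI n I \<tau>' = mat (n + n) n (\<lambda>(r,j). dd n ?E r * PhiI n I \<tau> $$ (r, id j) * g j)"
  proof (rule eq_matI)
    fix r j assume "r < dim_row (mat (n + n) n (\<lambda>(r,j). dd n ?E r * PhiI n I \<tau> $$ (r, id j) * g j))"
      "j < dim_col (mat (n + n) n (\<lambda>(r,j). dd n ?E r * PhiI n I \<tau> $$ (r, id j) * g j))"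
    then have rj: "r < n + n" "j < n" by auto
    show "PhiI n I \<tau>' $$ (r,j) = mat (n + n) n (\<lambda>(r,j). dd n ?E r * PhiI n I \<tau> $$ (r, id j) * g j) $$ (r,j)"
    proof (cases "r < n")
      case True
      let ?i = "?isg r"
      have "PhiI n I \<tau>' $$ (r,j) = Fe (card I) \<tau>' ?i j" using rj True by (simp add: PhiI_mat[OF I tc(2)])
      also have "\<dots> = g ?i * Fe (card I) \<tau> ?i j * g j"
        using \<tau>'e[of ?i j] by (auto simp: Fe_def g_def algebra_simps)
      also have "\<dots> = mat (n + n) n (\<lambda>(r,j). dd n ?E r * PhiI n I \<tau> $$ (r, id j) * g j) $$ (r,j)"
        using rj True by (simp add: PhiI_mat[OF I tc(1)] dd_def sdiag_def)
      finally show ?thesis .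
    next
      case False
      let ?i = "?isg (r - n)"
      have rn: "r - n < n" using rj False by simp
      have "PhiI n I \<tau>' $$ (r,j) = Ge (card I) ?i j" using rj False by (simp add: PhiI_mat[OF I tc(2)])
      also have "\<dots> = g ?i * Ge (card I) ?i j * g j"
        using gg[of ?i] by (auto simp: Ge_def)
      also have "\<dots> = mat (n + n) n (\<lambda>(r,j). dd n ?E r * PhiI n I \<tau> $$ (r, id j) * g j) $$ (r,j)"
        using rj False rn by (simp add: PhiI_mat[OF I tc(1)] dd_def sdiag_def)
      finally show ?thesis .
    qed
  qed (auto simp: PhiI_mat[OF I tc(2)])
  then show ?thesis
    by (intro Omega_relI2[OF PhiI_in_OmegaI[OF I t(1)] PhiI_in_OmegaI[OF I t(2)] E permutes_id]) (use g in auto)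
qed

lemma inject:
  assumes I: "I \<subseteq> {..<n}" and t: "\<tau> \<in> SPI (card I)" "\<tau>' \<in> SPI (card I)"
    and r: "(PhiI n I \<tau>, PhiI n I \<tau>') \<in> Omega_rel n I"
  shows "(\<tau>, \<tau>') \<in> SPI_rel (card I)"
proof -
  have tc: "\<tau> \<in> carrier_mat (card I) (card I)" "\<tau>' \<in> carrier_mat (card I) (card I)"
    using t SPI_carrier by auto
  have m: "card I \<le> n" by (rule card_le_n[OF I])
  obtain E p s where E: "E \<in> sign_diags n" and p: "p permutes {..<n}" and s: "\<forall>j<n. s j \<in> {1,-1}"
    and eq: "PhiI n I \<tau>' = mat (n + n) n (\<lambda>(r,j). dd n E r * PhiI n I \<tau> $$ (r, p j) * s j)"
    using Omega_relD(3)[OF r] by blast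
  let ?sg = "sigmaI n I"
  have pn: "p j < n" if "j < n" for j using permutes_in_image[OF p, of j] that by simp
  have key: "p i = i \<and> E $$ (?sg i, ?sg i) = s i" if i: "i < card I" for i
  proof -
    have iN: "i < n" using i m by simp
    note sg = sg_facts[OF I iN]
    have "PhiI n I \<tau>' $$ (n + ?sg i, i) = 1"
      using sg i iN by (simp add: PhiI_mat[OF I tc(2)] Ge_def)
    moreover have "PhiI n I \<tau>' $$ (n + ?sg i, i) = E $$ (?sg i, ?sg i) * Ge (card I) i (p i) * s i"
      using sg i iN pn[OF iN] by (simp add: eq PhiI_mat[OF I tc(1)] dd_def)
    ultimately have h: "E $$ (?sg i, ?sg i) * Ge (card I) i (p i) * s i = 1" by simp
    then have "p i = i" by (auto simp: Ge_def split: if_splits)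
    moreover have "E $$ (?sg i, ?sg i) * s i = 1" using h \<open>p i = i\<close> i by (simp add: Ge_def)
    moreover have "E $$ (?sg i, ?sg i) \<in> {1,-1}" "s i \<in> {1,-1}" using sign_diags_entry[OF E sg(1)] s iN by auto
    ultimately show ?thesis by auto
  qed
  have S: "sdiag (card I) s \<in> sign_diags (card I)" by (rule sdiag_in_sign_diags) (use s m in auto)
  have "\<tau>' = mat (card I) (card I) (\<lambda>(i,j). sdiag (card I) s $$ (i,i) * \<tau> $$ (i,j) * sdiag (card I) s $$ (j,j))"
  proof (rule eq_matI)
    fix i j assume "i < dim_row (mat (card I) (card I) (\<lambda>(i,j). sdiag (card I) s $$ (i,i) * \<tau> $$ (i,j) * sdiag (card I) s $$ (j,j)))"
      "j < dim_col (mat (card I) (card I) (\<lambda>(i,j). sdiag (card I) s $$ (i,i) * \<tau> $$ (i,j) * sdiag (card I) s $$ (j,j)))"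
    then have ij: "i < card I" "j < card I" by auto
    then have ijn: "i < n" "j < n" using m by auto
    note sg = sg_facts[OF I ijn(1)]
    have "\<tau>' $$ (i,j) = PhiI n I \<tau>' $$ (?sg i, j)"
      using sg ij ijn by (simp add: PhiI_mat[OF I tc(2)] Fe_def)
    also have "\<dots> = E $$ (?sg i, ?sg i) * Fe (card I) \<tau> i (p j) * s j"
      using sg ijn pn[OF ijn(2)] by (simp add: eq PhiI_mat[OF I tc(1)] dd_def)
    also have "\<dots> = s i * \<tau> $$ (i,j) * s j"
      using key[OF ij(1)] key[OF ij(2)] ij by (simp add: Fe_def)
    finally show "\<tau>' $$ (i,j) = mat (card I) (card I) (\<lambda>(i,j). sdiag (card I) s $$ (i,i) * \<tau> $$ (i,j) * sdiag (card I) s $$ (j,j)) $$ (i,j)"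
      using ij by (simp add: sdiag_def)
  qed (use tc in auto)
  then have "\<tau>' = sdiag (card I) s * \<tau> * sdiag (card I) s" using spi_formula[OF S tc(1)] by simp
  then show ?thesis unfolding SPI_rel_def using t S by auto
qed

locale SC =
  fixes n :: nat and I :: "nat set" and t1 t2 :: "int mat"
  assumes I: "I \<subseteq> {..<n}"
    and t1: "t1 \<in> SPP n" and t2: "t2 \<in> SPP n"
    and sym: "transpose_mat (transpose_mat t1 * t2) = transpose_mat t1 * t2"
    and rk: "int_rank (t1 @\<^sub>r t2) = n"
    and ech: "ech t2 = I"
begin

abbreviation "sg \<equiv> sigmaI n I"
abbreviation "isg \<equiv> inv_into UNIV (sigmaI n I)"

definition pi1 :: "nat \<Rightarrow> nat" where "pi1 k = (SOME c. c < n \<and> t2 $$ (sg k, c) \<noteq> 0)"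
definition J :: "nat set" where "J = pi1 ` {..<card I}"
definition C :: "nat set" where "C = {..<n} - J"
definition rho :: "nat \<Rightarrow> nat" where "rho c = (SOME r. r < n \<and> t1 $$ (r, c) \<noteq> 0)"

lemma m_le: "card I \<le> n" by (rule card_le_n[OF I])

lemmas T1 = SPP_D[OF t1] and T2 = SPP_D[OF t2]

lemma t2_row_nz: "r < n \<Longrightarrow> (\<exists>c<n. t2 $$ (r,c) \<noteq> 0) \<longleftrightarrow> r \<in> I"
  using ech_SPP[OF t2] ech by auto

lemma pi1: assumes k: "k < card I" shows "pi1 k < n" "t2 $$ (sg k, pi1 k) \<noteq> 0"
proof -
  have kn: "k < n" using k m_le by simp
  have "sg k \<in> I" using sigmaI_facts(2)[OF I kn] k by simp
  then have ex: "\<exists>c. c < n \<and> t2 $$ (sg k, c) \<noteq> 0" using t2_row_nz[OF sg_facts(1)[OF I kn]] by auto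
  have "pi1 k < n \<and> t2 $$ (sg k, pi1 k) \<noteq> 0" unfolding pi1_def by (rule someI_ex[OF ex])
  then show "pi1 k < n" "t2 $$ (sg k, pi1 k) \<noteq> 0" by auto
qed

lemma t2_nz:
  assumes rc: "r < n" "c < n" "t2 $$ (r,c) \<noteq> 0"
  shows "isg r < card I \<and> r = sg (isg r) \<and> c = pi1 (isg r)"
proof -
  have "r \<in> I" using t2_row_nz[OF rc(1)] rc by auto
  then have k: "isg r < card I" using isg_facts(3)[OF I rc(1)] by simp
  have r: "sg (isg r) = r" by (rule isg_facts(2)[OF I rc(1)])
  have "t2 $$ (r, pi1 (isg r)) \<noteq> 0" "pi1 (isg r) < n" using pi1[OF k] r by auto
  then have "c = pi1 (isg r)" using T2(3)[of r c "pi1 (isg r)"] rc by simp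
  then show ?thesis using k r by simp
qed

lemma pi1_inj: "inj_on pi1 {..<card I}"
proof (rule inj_onI)
  fix k k' assume kk: "k \<in> {..<card I}" "k' \<in> {..<card I}" "pi1 k = pi1 k'"
  then have kn: "k < n" "k' < n" using m_le by auto
  have a: "t2 $$ (sg k, pi1 k) \<noteq> 0" using pi1(2) kk(1) by simp
  have b: "t2 $$ (sg k', pi1 k') \<noteq> 0" using pi1(2) kk(2) by simp
  have b': "t2 $$ (sg k', pi1 k) \<noteq> 0" using b kk(3) by simp
  from a b' have "sg k = sg k'" using T2(4)[of "sg k" "sg k'" "pi1 k"] sg_facts(1)[OF I] kn pi1(1) kk by auto
  then have "isg (sg k) = isg (sg k')" by simp
  then show "k = k'" using sg_facts(2)[OF I] kn by simp
qed

lemma card_J: "card J = card I" unfolding J_def using card_image[OF pi1_inj] by simp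

lemma J_sub: "J \<subseteq> {..<n}" unfolding J_def using pi1(1) by auto

lemma col_notJ: "c < n \<Longrightarrow> c \<notin> J \<Longrightarrow> r < n \<Longrightarrow> t2 $$ (r,c) = 0"
  using t2_nz[of r c] unfolding J_def by force

lemma col_sum:
  assumes k: "k < card I" and c: "c < n"
  shows "(\<Sum>r\<in>{0..<n}. t1 $$ (r,c) * t2 $$ (r, pi1 k)) = t1 $$ (sg k, c) * t2 $$ (sg k, pi1 k)"
proof (rule sum_single)
  have kn: "k < n" using k m_le by simp
  show "sg k \<in> {0..<n}" using sg_facts(1)[OF I kn] by simp
  fix r assume r: "r \<in> {0..<n}" "r \<noteq> sg k"
  have "t2 $$ (r, pi1 k) = 0"
  proof (rule ccontr)
    assume "t2 $$ (r, pi1 k) \<noteq> 0"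
    then have "r = sg k" using T2(4)[of r "sg k" "pi1 k"] pi1[OF k] sg_facts(1)[OF I kn] r by simp
    then show False using r by simp
  qed
  then show "t1 $$ (r,c) * t2 $$ (r, pi1 k) = 0" by simp
qed simp

lemma Msym: "a < n \<Longrightarrow> b < n \<Longrightarrow> (transpose_mat t1 * t2) $$ (a,b) = (transpose_mat t1 * t2) $$ (b,a)"
proof -
  assume ab: "a < n" "b < n"
  have "(transpose_mat t1 * t2) $$ (a,b) = transpose_mat (transpose_mat t1 * t2) $$ (a,b)" using sym by simp
  also have "\<dots> = (transpose_mat t1 * t2) $$ (b,a)" using ab T1(1) T2(1) by simp
  finally show ?thesis .
qed

lemma F3:
  assumes k: "k < card I" and c: "c < n" "c \<notin> J"
  shows "t1 $$ (sg k, c) = 0"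
proof -
  have "(transpose_mat t1 * t2) $$ (c, pi1 k) = t1 $$ (sg k, c) * t2 $$ (sg k, pi1 k)"
    using transpose_mult_index[OF T1(1) T2(1) c(1) pi1(1)[OF k]] col_sum[OF k c(1)] by simp
  moreover have "(transpose_mat t1 * t2) $$ (pi1 k, c) = 0"
    using transpose_mult_index[OF T1(1) T2(1) pi1(1)[OF k] c(1)] col_notJ[OF c] by simp
  ultimately have "t1 $$ (sg k, c) * t2 $$ (sg k, pi1 k) = 0" using Msym[OF c(1) pi1(1)[OF k]] by simp
  then show ?thesis using pi1(2)[OF k] by simp
qed

lemma colnz:
  assumes c: "c < n"
  shows "\<exists>r<n. t1 $$ (r,c) \<noteq> 0 \<or> t2 $$ (r,c) \<noteq> 0"
proof (rule ccontr)
  assume nz: "\<not> ?thesis"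
  let ?M = "t1 @\<^sub>r t2"
  have Mc: "?M \<in> carrier_mat (n + n) n" using T1(1) T2(1) by auto
  have Me: "?M = mat (n + n) n (\<lambda>(r,j). if r < n then t1 $$ (r,j) else t2 $$ (r - n, j))"
    by (rule append_rows_mat[OF T1(1) T2(1)])
  have "{j. j < n \<and> (\<exists>i<n + n. ?M $$ (i,j) \<noteq> 0)} \<subseteq> {..<n} - {c}"
  proof
    fix j assume "j \<in> {j. j < n \<and> (\<exists>i<n + n. ?M $$ (i,j) \<noteq> 0)}"
    then obtain i where ij: "j < n" "i < n + n" "?M $$ (i,j) \<noteq> 0" by auto
    have "j \<noteq> c"
    proof
      assume "j = c"
      show False
      proof (cases "i < n")
        case True
        then have "t1 $$ (i,c) \<noteq> 0" using ij \<open>j = c\<close> Me by simp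
        then show False using nz True by blast
      next
        case False
        then have "t2 $$ (i - n,c) \<noteq> 0" "i - n < n" using ij \<open>j = c\<close> Me by auto
        then show False using nz by blast
      qed
    qed
    then show "j \<in> {..<n} - {c}" using ij by simp
  qed
  then have "card {j. j < n \<and> (\<exists>i<n + n. ?M $$ (i,j) \<noteq> 0)} \<le> card ({..<n} - {c})"
    by (intro card_mono) auto
  also have "\<dots> < n" using c by simp
  finally have "int_rank ?M < n" using int_rank_upper[OF Mc] by simp
  then show False using rk by simp
qed

lemma rho:
  assumes c: "c \<in> C"
  shows "rho c < n" "t1 $$ (rho c, c) \<noteq> 0" "rho c \<notin> I"
proof -
  have cn: "c < n" "c \<notin> J" using c unfolding C_def by auto
  have ex: "\<exists>r. r < n \<and> t1 $$ (r,c) \<noteq> 0" using colnz[OF cn(1)] col_notJ[OF cn] by blast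
  have h: "rho c < n \<and> t1 $$ (rho c, c) \<noteq> 0" unfolding rho_def by (rule someI_ex[OF ex])
  then show "rho c < n" "t1 $$ (rho c, c) \<noteq> 0" by auto
  show "rho c \<notin> I"
  proof
    assume "rho c \<in> I"
    then have k: "isg (rho c) < card I" using isg_facts(3)[OF I] h by simp
    have "t1 $$ (sg (isg (rho c)), c) = 0" by (rule F3[OF k cn])
    then show False using isg_facts(2)[OF I] h by simp
  qed
qed

lemma rho_inj: "inj_on rho C"
proof (rule inj_onI)
  fix c c' assume cc: "c \<in> C" "c' \<in> C" "rho c = rho c'"
  have a: "t1 $$ (rho c, c) \<noteq> 0" using rho(2)[OF cc(1)] .
  have b: "t1 $$ (rho c', c') \<noteq> 0" using rho(2)[OF cc(2)] .
  have b': "t1 $$ (rho c, c') \<noteq> 0" using b cc(3) by simp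
  from a b' show "c = c'" using T1(3)[of "rho c" c c'] rho(1)[OF cc(1)] cc(1,2) unfolding C_def by auto
qed

lemma rho_bij: "bij_betw rho C ({..<n} - I)"
  unfolding bij_betw_def
proof
  show "inj_on rho C" by (rule rho_inj)
  have sub: "rho ` C \<subseteq> {..<n} - I" using rho by auto
  have "card (rho ` C) = card C" by (rule card_image[OF rho_inj])
  also have "\<dots> = n - card I" unfolding C_def using card_Diff_subset[OF finite_subset[OF J_sub] J_sub] card_J by simp
  also have "\<dots> = card ({..<n} - I)" using card_Diff_subset[OF finite_subset[OF I] I] by simp
  finally show "rho ` C = {..<n} - I" by (intro card_subset_eq[OF _ sub]) auto
qed

end

context SC begin

definition pi :: "nat \<Rightarrow> nat" where
  "pi k = (if k < card I then pi1 k else if k < n then the_inv_into C rho (sg k) else k)"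
definition eps :: "nat \<Rightarrow> int" where
  "eps k = (if k < card I then t2 $$ (sg k, pi k) else t1 $$ (sg k, pi k))"
definition A :: "int mat" where
  "A = mat (card I) (card I) (\<lambda>(i,j). t1 $$ (sg i, pi j) * eps j)"

lemma C_sub: "C \<subseteq> {..<n}" unfolding C_def by auto

lemma pi_high:
  assumes k: "card I \<le> k" "k < n"
  shows "pi k \<in> C" "rho (pi k) = sg k"
proof -
  have "sg k \<notin> I" using sigmaI_facts(2)[OF I k(2)] k(1) by simp
  then have sk: "sg k \<in> rho ` C" using rho_bij sg_facts(1)[OF I k(2)] unfolding bij_betw_def by auto
  have pk: "pi k = the_inv_into C rho (sg k)" using k unfolding pi_def by simp
  show "pi k \<in> C" unfolding pk by (rule the_inv_into_into[OF rho_inj sk subset_refl])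
  show "rho (pi k) = sg k" unfolding pk by (rule f_the_inv_into_f[OF rho_inj sk])
qed

lemma pi_lt: "k < n \<Longrightarrow> pi k < n"
proof -
  assume k: "k < n"
  show "pi k < n"
  proof (cases "k < card I")
    case True then show ?thesis using pi1(1) unfolding pi_def by simp
  next
    case False then show ?thesis using pi_high(1)[of k] k C_sub by auto
  qed
qed

lemma pi_low_J: "k < card I \<Longrightarrow> pi k \<in> J"
  unfolding pi_def J_def by simp

lemma pi_inj: "inj_on pi {..<n}"
proof (rule inj_onI)
  fix k k' assume kk: "k \<in> {..<n}" "k' \<in> {..<n}" "pi k = pi k'"
  show "k = k'"
  proof (cases "k < card I")
    case True
    show ?thesis
    proof (cases "k' < card I")
      case True
      then show ?thesis using \<open>k < card I\<close> kk pi1_inj unfolding pi_def inj_on_def by auto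
    next
      case False
      then have "pi k' \<in> C" using pi_high(1)[of k'] kk by auto
      moreover have "pi k \<in> J" using pi_low_J[OF True] .
      ultimately show ?thesis using kk(3) unfolding C_def by auto
    qed
  next
    case False
    show ?thesis
    proof (cases "k' < card I")
      case True
      then have "pi k' \<in> J" using pi_low_J by simp
      moreover have "pi k \<in> C" using pi_high(1)[of k] kk False by auto
      ultimately show ?thesis using kk(3) unfolding C_def by auto
    next
      case False
      have "sg k = sg k'" using pi_high(2)[of k] pi_high(2)[of k'] kk \<open>\<not> k < card I\<close> False by auto
      then have "isg (sg k) = isg (sg k')" by simp
      then show ?thesis using sg_facts(2)[OF I] kk by simp
    qed
  qed
qed

lemma pi_perm: "pi permutes {..<n}"
proof (rule bij_imp_permutes)
  have "pi ` {..<n} \<subseteq> {..<n}" using pi_lt by auto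
  then have "pi ` {..<n} = {..<n}" by (intro endo_inj_surj[OF _ _ pi_inj]) auto
  then show "bij_betw pi {..<n} {..<n}" unfolding bij_betw_def using pi_inj by simp
next
  fix x assume "x \<notin> {..<n}"
  then show "pi x = x" unfolding pi_def using m_le by auto
qed

lemma nz_low: "k < card I \<Longrightarrow> t2 $$ (sg k, pi k) \<noteq> 0"
  using pi1(2) unfolding pi_def by simp

lemma nz_high: "card I \<le> k \<Longrightarrow> k < n \<Longrightarrow> t1 $$ (sg k, pi k) \<noteq> 0"
  using rho(2)[OF pi_high(1)] pi_high(2) by metis

lemma eps_sign: "k < n \<Longrightarrow> eps k \<in> {1,-1}"
proof -
  assume k: "k < n"
  have sk: "sg k < n" "pi k < n" using sg_facts(1)[OF I k] pi_lt[OF k] by auto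
  show "eps k \<in> {1,-1}"
  proof (cases "k < card I")
    case True
    then show ?thesis using T2(2)[OF sk] nz_low[OF True] unfolding eps_def by auto
  next
    case False
    then show ?thesis using T1(2)[OF sk] nz_high[of k] k unfolding eps_def by auto
  qed
qed

lemma eps_sq: "k < n \<Longrightarrow> eps k * eps k = 1" using sq_sign eps_sign by blast

lemma t1_UR: "i < card I \<Longrightarrow> card I \<le> j \<Longrightarrow> j < n \<Longrightarrow> t1 $$ (sg i, pi j) = 0"
  using F3 pi_high(1)[of j] pi_lt[of j] unfolding C_def by auto

lemma t1_high: "card I \<le> i \<Longrightarrow> i < n \<Longrightarrow> j < n \<Longrightarrow> j \<noteq> i \<Longrightarrow> t1 $$ (sg i, pi j) = 0"
proof (rule ccontr)
  assume ij: "card I \<le> i" "i < n" "j < n" "j \<noteq> i" and nz: "t1 $$ (sg i, pi j) \<noteq> 0"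
  have "pi j = pi i" using T1(3)[of "sg i" "pi j" "pi i"] nz nz_high[OF ij(1,2)] sg_facts(1)[OF I ij(2)] pi_lt ij by auto
  then show False using pi_inj ij unfolding inj_on_def by auto
qed

lemma t2_low: "i < card I \<Longrightarrow> j < n \<Longrightarrow> j \<noteq> i \<Longrightarrow> t2 $$ (sg i, pi j) = 0"
proof (rule ccontr)
  assume ij: "i < card I" "j < n" "j \<noteq> i" and nz: "t2 $$ (sg i, pi j) \<noteq> 0"
  have iN: "i < n" using ij m_le by simp
  have "pi j = pi i" using T2(3)[of "sg i" "pi j" "pi i"] nz nz_low[OF ij(1)] sg_facts(1)[OF I iN] pi_lt ij iN by auto
  then show False using pi_inj ij iN unfolding inj_on_def by auto
qed

lemma t2_high: "card I \<le> i \<Longrightarrow> i < n \<Longrightarrow> c < n \<Longrightarrow> t2 $$ (sg i, c) = 0"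
proof -
  assume ic: "card I \<le> i" "i < n" "c < n"
  have "sg i \<notin> I" using sigmaI_facts(2)[OF I ic(2)] ic(1) by simp
  then have "\<not> (\<exists>c<n. t2 $$ (sg i, c) \<noteq> 0)" using t2_row_nz[OF sg_facts(1)[OF I ic(2)]] by simp
  then show "t2 $$ (sg i, c) = 0" using ic(3) by auto
qed

lemma A_sym_entry:
  assumes ij: "i < card I" "j < card I"
  shows "t1 $$ (sg i, pi j) * eps j = t1 $$ (sg j, pi i) * eps i"
proof -
  have n: "i < n" "j < n" using ij m_le by auto
  have e: "eps i = t2 $$ (sg i, pi1 i)" "eps j = t2 $$ (sg j, pi1 j)" "pi i = pi1 i" "pi j = pi1 j"
    using ij unfolding eps_def pi_def by auto
  have "(transpose_mat t1 * t2) $$ (pi j, pi i) = t1 $$ (sg i, pi j) * eps i"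
    using transpose_mult_index[OF T1(1) T2(1) pi_lt[OF n(2)] pi_lt[OF n(1)]] col_sum[OF ij(1) pi_lt[OF n(2)]] e by simp
  moreover have "(transpose_mat t1 * t2) $$ (pi i, pi j) = t1 $$ (sg j, pi i) * eps j"
    using transpose_mult_index[OF T1(1) T2(1) pi_lt[OF n(1)] pi_lt[OF n(2)]] col_sum[OF ij(2) pi_lt[OF n(1)]] e by simp
  ultimately have h: "t1 $$ (sg i, pi j) * eps i = t1 $$ (sg j, pi i) * eps j"
    using Msym[OF pi_lt[OF n(1)] pi_lt[OF n(2)]] by simp
  have "t1 $$ (sg i, pi j) * eps j = t1 $$ (sg i, pi j) * eps j * (eps i * eps i)" using eps_sq[OF n(1)] by simp
  also have "\<dots> = (t1 $$ (sg i, pi j) * eps i) * eps i * eps j" by (simp add: algebra_simps)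
  also have "\<dots> = (t1 $$ (sg j, pi i) * eps j) * eps i * eps j" using h by simp
  also have "\<dots> = t1 $$ (sg j, pi i) * eps i * (eps j * eps j)" by (simp add: algebra_simps)
  also have "\<dots> = t1 $$ (sg j, pi i) * eps i" using eps_sq[OF n(2)] by simp
  finally show ?thesis .
qed

lemma A_SPI: "A \<in> SPI (card I)"
proof -
  have SP: "A \<in> SPP (card I)"
  proof (rule SPP_intro)
    show "A \<in> carrier_mat (card I) (card I)" unfolding A_def by simp
  next
    fix i j assume ij: "i < card I" "j < card I"
    then have n: "i < n" "j < n" using m_le by auto
    have "t1 $$ (sg i, pi j) \<in> {-1,0,1}" using T1(2)[OF sg_facts(1)[OF I n(1)] pi_lt[OF n(2)]] .
    then show "A $$ (i,j) \<in> {-1,0,1}" using eps_sign[OF n(2)] ij unfolding A_def by auto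
  next
    fix i j j' assume ij: "i < card I" "j < card I" "j' < card I" "A $$ (i,j) \<noteq> 0" "A $$ (i,j') \<noteq> 0"
    then have n: "i < n" "j < n" "j' < n" using m_le by auto
    have "t1 $$ (sg i, pi j) \<noteq> 0" "t1 $$ (sg i, pi j') \<noteq> 0" using ij unfolding A_def by auto
    then have "pi j = pi j'" using T1(3) sg_facts(1)[OF I n(1)] pi_lt n by blast
    then show "j = j'" using pi_inj n unfolding inj_on_def by auto
  next
    fix i i' j assume ij: "i < card I" "i' < card I" "j < card I" "A $$ (i,j) \<noteq> 0" "A $$ (i',j) \<noteq> 0"
    then have n: "i < n" "i' < n" "j < n" using m_le by auto
    have "t1 $$ (sg i, pi j) \<noteq> 0" "t1 $$ (sg i', pi j) \<noteq> 0" using ij unfolding A_def by auto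
    then have "sg i = sg i'" using T1(4) sg_facts(1)[OF I] pi_lt n by blast
    then have "isg (sg i) = isg (sg i')" by simp
    then show "i = i'" using sg_facts(2)[OF I] n by simp
  qed
  have "transpose_mat A = A"
    by (rule eq_matI) (auto simp: A_def A_sym_entry)
  then show ?thesis unfolding SPI_def using SP by simp
qed

lemma A_carrier: "A \<in> carrier_mat (card I) (card I)" unfolding A_def by simp

lemma PhiI_A:
  "PhiI n I A = mat (n + n) n (\<lambda>(r,j). dd n (sdiag n (\<lambda>_. 1)) r * (t1 @\<^sub>r t2) $$ (r, pi j) * eps j)"
proof (rule eq_matI)
  fix r j assume "r < dim_row (mat (n + n) n (\<lambda>(r,j). dd n (sdiag n (\<lambda>_. 1)) r * (t1 @\<^sub>r t2) $$ (r, pi j) * eps j))"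
    "j < dim_col (mat (n + n) n (\<lambda>(r,j). dd n (sdiag n (\<lambda>_. 1)) r * (t1 @\<^sub>r t2) $$ (r, pi j) * eps j))"
  then have rj: "r < n + n" "j < n" by auto
  have pj: "pi j < n" by (rule pi_lt[OF rj(2)])
  have RHS: "mat (n + n) n (\<lambda>(r,j). dd n (sdiag n (\<lambda>_. 1)) r * (t1 @\<^sub>r t2) $$ (r, pi j) * eps j) $$ (r,j)
    = (if r < n then t1 $$ (r, pi j) else t2 $$ (r - n, pi j)) * eps j"
    using rj pj T1(1) T2(1) by (simp add: append_rows_mat[OF T1(1) T2(1)] dd_def sdiag_def)
  show "PhiI n I A $$ (r,j) = mat (n + n) n (\<lambda>(r,j). dd n (sdiag n (\<lambda>_. 1)) r * (t1 @\<^sub>r t2) $$ (r, pi j) * eps j) $$ (r,j)"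
    unfolding RHS
  proof (cases "r < n")
    case True
    define i where "i = isg r"
    have i: "i < n" "sg i = r" using isg_facts(1,2)[OF I True] unfolding i_def by auto
    have L: "PhiI n I A $$ (r,j) = Fe (card I) A i j" using rj True by (simp add: PhiI_mat[OF I A_carrier] i_def)
    have "Fe (card I) A i j = t1 $$ (sg i, pi j) * eps j"
    proof (cases "i < card I")
      case True
      show ?thesis
      proof (cases "j < card I")
        case True then show ?thesis using \<open>i < card I\<close> by (simp add: Fe_def A_def)
      next
        case False then show ?thesis using \<open>i < card I\<close> t1_UR[of i j] rj by (simp add: Fe_def)
      qed
    next
      case False
      show ?thesis
      proof (cases "j = i")
        case True
        have "t1 $$ (sg i, pi j) * eps j = eps i * eps i" using True False unfolding eps_def by simp
        then show ?thesis using eps_sq[OF i(1)] True False by (simp add: Fe_def)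
      next
        case ne: False
        have "t1 $$ (sg i, pi j) = 0" by (rule t1_high) (use False i rj ne in auto)
        then show ?thesis using ne False by (simp add: Fe_def)
      qed
    qed
    then show "PhiI n I A $$ (r,j) = (if r < n then t1 $$ (r, pi j) else t2 $$ (r - n, pi j)) * eps j"
      using L True i by simp
  next
    case False
    define i where "i = isg (r - n)"
    have rn: "r - n < n" using rj False by simp
    have i: "i < n" "sg i = r - n" using isg_facts(1,2)[OF I rn] unfolding i_def by auto
    have L: "PhiI n I A $$ (r,j) = Ge (card I) i j" using rj False by (simp add: PhiI_mat[OF I A_carrier] i_def)
    have "Ge (card I) i j = t2 $$ (sg i, pi j) * eps j"
    proof (cases "i < card I")
      case True
      show ?thesis
      proof (cases "j = i")
        case True
        have "t2 $$ (sg i, pi j) * eps j = eps i * eps i" using True \<open>i < card I\<close> unfolding eps_def by simp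
        then show ?thesis using eps_sq[OF i(1)] True \<open>i < card I\<close> by (simp add: Ge_def)
      next
        case ne: False
        have "t2 $$ (sg i, pi j) = 0" by (rule t2_low) (use True rj ne in auto)
        then show ?thesis using ne by (simp add: Ge_def)
      qed
    next
      case False
      then show ?thesis using t2_high[OF _ i(1) pj] by (simp add: Ge_def)
    qed
    then show "PhiI n I A $$ (r,j) = (if r < n then t1 $$ (r, pi j) else t2 $$ (r - n, pi j)) * eps j"
      using L False i by simp
  qed
qed (auto simp: PhiI_mat[OF I A_carrier])

end

lemma append_rows_inj:
  assumes A: "A \<in> carrier_mat n k" and C: "C \<in> carrier_mat n k" and B: "B \<in> carrier_mat n' k" and D: "D \<in> carrier_mat n' k"
    and eq: "A @\<^sub>r B = C @\<^sub>r D"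
  shows "A = C \<and> B = D"
proof
  have e: "mat (n + n') k (\<lambda>(r,j). if r < n then A $$ (r,j) else B $$ (r - n, j)) =
    mat (n + n') k (\<lambda>(r,j). if r < n then C $$ (r,j) else D $$ (r - n, j))"
    using eq append_rows_mat[OF A B] append_rows_mat[OF C D] by simp
  show "A = C"
  proof (rule eq_matI)
    fix i j assume ij: "i < dim_row C" "j < dim_col C"
    then have "mat (n + n') k (\<lambda>(r,j). if r < n then A $$ (r,j) else B $$ (r - n, j)) $$ (i,j) =
      mat (n + n') k (\<lambda>(r,j). if r < n then C $$ (r,j) else D $$ (r - n, j)) $$ (i,j)" using e by simp
    then show "A $$ (i,j) = C $$ (i,j)" using ij C by simp
  qed (use A C in auto)
  show "B = D"
  proof (rule eq_matI)
    fix i j assume ij: "i < dim_row D" "j < dim_col D"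
    then have "mat (n + n') k (\<lambda>(r,j). if r < n then A $$ (r,j) else B $$ (r - n, j)) $$ (n + i,j) =
      mat (n + n') k (\<lambda>(r,j). if r < n then C $$ (r,j) else D $$ (r - n, j)) $$ (n + i,j)" using e by simp
    then show "B $$ (i,j) = D $$ (i,j)" using ij D by simp
  qed (use B D in auto)
qed

lemma surject:
  assumes I: "I \<subseteq> {..<n}" and w: "\<omega> \<in> OmegaI n I"
  shows "\<exists>\<tau> \<in> SPI (card I). (PhiI n I \<tau>, \<omega>) \<in> Omega_rel n I"
proof -
  obtain t1 t2 where o: "\<omega> = t1 @\<^sub>r t2" "t1 @\<^sub>r t2 \<in> Omega0 n" "t1 \<in> carrier_mat n n" "t2 \<in> carrier_mat n n" "ech t2 = I"
    using w unfolding OmegaI_def by auto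
  obtain a b where ab: "t1 @\<^sub>r t2 = a @\<^sub>r b" "a \<in> SPP n" "b \<in> SPP n"
    "transpose_mat (transpose_mat a * b) = transpose_mat a * b" "int_rank (a @\<^sub>r b) = n"
    using o(2) unfolding Omega0_def by auto
  have "t1 = a \<and> t2 = b" by (rule append_rows_inj[OF o(3) SPP_D(1)[OF ab(2)] o(4) SPP_D(1)[OF ab(3)] ab(1)])
  then have t: "t1 \<in> SPP n" "t2 \<in> SPP n" "transpose_mat (transpose_mat t1 * t2) = transpose_mat t1 * t2"
    "int_rank (t1 @\<^sub>r t2) = n" using ab by auto
  interpret SC n I t1 t2 by (unfold_locales) (use I t o(5) in auto)
  have E: "sdiag n (\<lambda>_. 1) \<in> sign_diags n" by (rule sdiag_in_sign_diags) simp
  have "(\<omega>, PhiI n I A) \<in> Omega_rel n I"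
    by (rule Omega_relI2[OF w PhiI_in_OmegaI[OF I A_SPI] E pi_perm]) (use eps_sign PhiI_A o(1) in auto)
  then have "(PhiI n I A, \<omega>) \<in> Omega_rel n I"
    using equiv_Omega_rel[of n I] unfolding equiv_def sym_def by blast
  then show ?thesis using A_SPI by blast
qed

theorem proposition5p3:
  fixes n :: nat and I :: "nat set"
  assumes "I \<subseteq> {..<n}"
  shows "PhiI n I ` SPI (card I) \<subseteq> OmegaI n I
    \<and> (\<forall>\<tau> \<tau>'. (\<tau>, \<tau>') \<in> SPI_rel (card I) \<longrightarrow> (PhiI n I \<tau>, PhiI n I \<tau>') \<in> Omega_rel n I)
    \<and> bij_betw (\<lambda>X. Omega_rel n I `` (PhiI n I ` X))
        (SPI (card I) // SPI_rel (card I)) (OmegaI n I // Omega_rel n I)"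
proof (intro conjI allI impI)
  show "PhiI n I ` SPI (card I) \<subseteq> OmegaI n I"
    using PhiI_in_OmegaI[OF assms] by blast
next
  fix \<tau> \<tau>' assume "(\<tau>, \<tau>') \<in> SPI_rel (card I)"
  then show "(PhiI n I \<tau>, PhiI n I \<tau>') \<in> Omega_rel n I" by (rule compat[OF assms])
next
  show "bij_betw (\<lambda>X. Omega_rel n I `` (PhiI n I ` X))
        (SPI (card I) // SPI_rel (card I)) (OmegaI n I // Omega_rel n I)"
  proof (rule quotient_bij[OF equiv_SPI_rel equiv_Omega_rel])
    fix a assume "a \<in> SPI (card I)"
    then show "PhiI n I a \<in> OmegaI n I" by (rule PhiI_in_OmegaI[OF assms])
  next
    fix a a' assume "(a, a') \<in> SPI_rel (card I)"
    then show "(PhiI n I a, PhiI n I a') \<in> Omega_rel n I" by (rule compat[OF assms])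
  next
    fix a a' assume "a \<in> SPI (card I)" "a' \<in> SPI (card I)" "(PhiI n I a, PhiI n I a') \<in> Omega_rel n I"
    then show "(a, a') \<in> SPI_rel (card I)" by (rule inject[OF assms])
  next
    fix b assume "b \<in> OmegaI n I"
    then show "\<exists>a\<in>SPI (card I). (PhiI n I a, b) \<in> Omega_rel n I" by (rule surject[OF assms])
  qed
qed

end
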